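(* Let $R$ be a reduced root system in a finite-dimensional real vector space $V$, let $W=W(R)$ be its Weyl group, let $\geq$ be a total ordering of $V$ and let $\{\alpha_1,\ldots,\alpha_r\}$ be the corresponding base of $R$. Let $T=\{t_1,\ldots,t_m\}\subset W$ be a set of reflections, $t_i=s_{\beta_i}$ with $\beta_i\in R^+$. Let $W'$ be the subgroup of $W$ generated by $T$, let $R'=W'\cdot\{\beta_1,\ldots,\beta_m\}$ and let $V'$ be the linear span of $R'$. Then $R'$ is a root system in $V'$ and $W'$ (acting on $V'$ by restriction) is its Weyl group. Furthermore, if $\{\alpha'_1,\ldots,\alpha'_\ell\}$ is the base of $R'$ associated with the total ordering induced by $\geq$ on $V'$, then the set $\{s_{\alpha'_1},\ldots,s_{\alpha'_\ell}\}$ may be obtained from $T$ by a finite sequence of Nielsen transformations.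
   Context: A total ordering of $V$ means a total order compatible with the vector space structure ($x\geq y \iff x-y\geq 0$; $x>0,y>0\Rightarrow x+y>0$; $x>0$, $c>0$ real $\Rightarrow cx>0$). $R^+=\{\alpha\in R:\alpha>0\}$, and the base associated with the ordering is the set of positive roots that are not sums of two positive roots. $s_\alpha$ denotes the reflection in the root $\alpha$. A Nielsen transformation of a finite subset $\{t_1,\ldots,t_m\}$ of a group consists in choosing $i\neq j$ and replacing $t_j$ by $t_it_jt_i^{-1}$ (leaving the other elements unchanged), giving a new subset. *)

theory Defs
  imports "HOL-Analysis.Analysis" "HOL-Library.FuncSet"
begin

text \<open>Maps on V are represented
extensionally by restricted functions (restrict f V).\<close>

definition coroot_cond :: "'a::euclidean_space set \<Rightarrow> 'a \<Rightarrow> ('a \<Rightarrow> real) \<Rightarrow> bool" where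
  "coroot_cond R \<alpha> f \<longleftrightarrow> linear f \<and> f \<alpha> = 2 \<and>
      (\<forall>\<beta>\<in>R. \<beta> - f \<beta> *\<^sub>R \<alpha> \<in> R) \<and> (\<forall>\<beta>\<in>R. f \<beta> \<in> \<int>)"

definition root_system :: "'a::euclidean_space set \<Rightarrow> 'a set \<Rightarrow> bool" where
  "root_system V R \<longleftrightarrow> subspace V \<and> finite R \<and> R \<subseteq> V \<and> 0 \<notin> R \<and> span R = V \<and>
      (\<forall>\<alpha>\<in>R. \<exists>f. coroot_cond R \<alpha> f)"

definition reduced :: "'a::euclidean_space set \<Rightarrow> bool" where
  "reduced R \<longleftrightarrow> (\<forall>\<alpha>\<in>R. \<forall>c. c *\<^sub>R \<alpha> \<in> R \<longrightarrow> c = 1 \<or> c = -1)"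

definition coroot :: "'a::euclidean_space set \<Rightarrow> 'a \<Rightarrow> 'a \<Rightarrow> real" where
  "coroot R \<alpha> = (SOME f. coroot_cond R \<alpha> f)"

definition refl :: "'a::euclidean_space set \<Rightarrow> 'a set \<Rightarrow> 'a \<Rightarrow> ('a \<Rightarrow> 'a)" where
  "refl V R \<alpha> = restrict (\<lambda>x. x - coroot R \<alpha> x *\<^sub>R \<alpha>) V"

definition map_inv :: "'a set \<Rightarrow> ('a \<Rightarrow> 'a) \<Rightarrow> ('a \<Rightarrow> 'a)" where
  "map_inv V f = restrict (inv_into V f) V"

inductive_set gen_group :: "'a set \<Rightarrow> ('a \<Rightarrow> 'a) set \<Rightarrow> ('a \<Rightarrow> 'a) set"
  for V S where
  gen_id: "restrict id V \<in> gen_group V S"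
| gen_mult: "g \<in> gen_group V S \<Longrightarrow> s \<in> S \<Longrightarrow> compose V s g \<in> gen_group V S"
| gen_inv: "g \<in> gen_group V S \<Longrightarrow> s \<in> S \<Longrightarrow> compose V (map_inv V s) g \<in> gen_group V S"

definition weyl :: "'a::euclidean_space set \<Rightarrow> 'a set \<Rightarrow> ('a \<Rightarrow> 'a) set" where
  "weyl V R = gen_group V (refl V R ` R)"

definition lt_of :: "('a \<Rightarrow> 'a \<Rightarrow> bool) \<Rightarrow> 'a \<Rightarrow> 'a \<Rightarrow> bool" where
  "lt_of le x y \<longleftrightarrow> le x y \<and> x \<noteq> y"

definition vs_total_order :: "'a::real_vector set \<Rightarrow> ('a \<Rightarrow> 'a \<Rightarrow> bool) \<Rightarrow> bool" where
  "vs_total_order V le \<longleftrightarrow>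
     (\<forall>x\<in>V. le x x) \<and>
     (\<forall>x\<in>V. \<forall>y\<in>V. le x y \<and> le y x \<longrightarrow> x = y) \<and>
     (\<forall>x\<in>V. \<forall>y\<in>V. \<forall>z\<in>V. le x y \<and> le y z \<longrightarrow> le x z) \<and>
     (\<forall>x\<in>V. \<forall>y\<in>V. le x y \<or> le y x) \<and>
     (\<forall>x\<in>V. \<forall>y\<in>V. le y x \<longleftrightarrow> le 0 (x - y)) \<and>
     (\<forall>x\<in>V. \<forall>y\<in>V. lt_of le 0 x \<and> lt_of le 0 y \<longrightarrow> lt_of le 0 (x + y)) \<and>
     (\<forall>x\<in>V. \<forall>c::real. lt_of le 0 x \<and> c > 0 \<longrightarrow> lt_of le 0 (c *\<^sub>R x))"

definition pos_roots :: "('a \<Rightarrow> 'a \<Rightarrow> bool) \<Rightarrow> 'a::real_vector set \<Rightarrow> 'a set" where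
  "pos_roots le R = {\<alpha>\<in>R. lt_of le 0 \<alpha>}"

definition base :: "('a \<Rightarrow> 'a \<Rightarrow> bool) \<Rightarrow> 'a::real_vector set \<Rightarrow> 'a set" where
  "base le R = {\<alpha>\<in>pos_roots le R.
      \<not> (\<exists>\<beta>\<in>pos_roots le R. \<exists>\<gamma>\<in>pos_roots le R. \<alpha> = \<beta> + \<gamma>)}"

definition nielsen_step :: "'a set \<Rightarrow> ('a \<Rightarrow> 'a) set \<Rightarrow> ('a \<Rightarrow> 'a) set \<Rightarrow> bool" where
  "nielsen_step V S S' \<longleftrightarrow> (\<exists>ti\<in>S. \<exists>tj\<in>S. ti \<noteq> tj \<and>
      S' = insert (compose V (compose V ti tj) (map_inv V ti)) (S - {tj}))"

end

theory Submission
  imports Defs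
begin

locale rs0 =
  fixes V :: "'a::euclidean_space set" and R :: "'a set"
  assumes rs: "root_system V R"
begin

lemma subV: "subspace V" and finR: "finite R" and RV: "R \<subseteq> V" and zR: "0 \<notin> R"
  and spanR: "span R = V"
  using rs unfolding root_system_def by auto

definition cr :: "'a \<Rightarrow> 'a \<Rightarrow> real" where "cr = coroot R"

lemma cr_cond: "\<alpha> \<in> R \<Longrightarrow> coroot_cond R \<alpha> (cr \<alpha>)"
  using rs unfolding root_system_def cr_def coroot_def by (metis someI_ex)

lemma cr_lin: "\<alpha> \<in> R \<Longrightarrow> linear (cr \<alpha>)"
  and cr_2: "\<alpha> \<in> R \<Longrightarrow> cr \<alpha> \<alpha> = 2"
  and cr_R: "\<alpha> \<in> R \<Longrightarrow> \<beta> \<in> R \<Longrightarrow> \<beta> - cr \<alpha> \<beta> *\<^sub>R \<alpha> \<in> R"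
  and cr_int: "\<alpha> \<in> R \<Longrightarrow> \<beta> \<in> R \<Longrightarrow> cr \<alpha> \<beta> \<in> \<int>"
  using cr_cond unfolding coroot_cond_def by auto

lemma uniq:
  assumes a: "\<alpha> \<in> R" and lf: "linear f" and lg: "linear g"
    and f2: "f \<alpha> = 2" and g2: "g \<alpha> = 2"
    and fR: "\<And>x. x \<in> R \<Longrightarrow> x - f x *\<^sub>R \<alpha> \<in> R"
    and gR: "\<And>x. x \<in> R \<Longrightarrow> x - g x *\<^sub>R \<alpha> \<in> R"
    and x: "x \<in> V"
  shows "f x = g x"
proof -
  have onR: "f y = g y" if y: "y \<in> R" for y
  proof (rule ccontr)
    assume ne: "f y \<noteq> g y"
    define d where "d = g y - f y"
    have dn: "d \<noteq> 0" using ne d_def by auto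
    have mem: "y + (real n * d) *\<^sub>R \<alpha> \<in> R" for n
    proof (induction n)
      case 0 then show ?case using y by simp
    next
      case (Suc n)
      define z where "z = y + (real n * d) *\<^sub>R \<alpha>"
      have z: "z \<in> R" using Suc z_def by simp
      have z1: "z - g z *\<^sub>R \<alpha> \<in> R" using gR z by blast
      have z2: "(z - g z *\<^sub>R \<alpha>) - f (z - g z *\<^sub>R \<alpha>) *\<^sub>R \<alpha> \<in> R" using fR z1 by blast
      have gz: "g z = g y + real n * d * 2" unfolding z_def
        using linear_add[OF lg] linear_scale[OF lg] g2 by simp
      have fz: "f z = f y + real n * d * 2" unfolding z_def
        using linear_add[OF lf] linear_scale[OF lf] f2 by simp
      have fz2: "f (z - g z *\<^sub>R \<alpha>) = f z - g z * 2"
        using linear_diff[OF lf] linear_scale[OF lf] f2 by simp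
      have "(z - g z *\<^sub>R \<alpha>) - f (z - g z *\<^sub>R \<alpha>) *\<^sub>R \<alpha> = y + (real (Suc n) * d) *\<^sub>R \<alpha>"
      proof -
        have "(z - g z *\<^sub>R \<alpha>) - f (z - g z *\<^sub>R \<alpha>) *\<^sub>R \<alpha> = z + (g z - f z) *\<^sub>R \<alpha>"
          unfolding fz2 by (simp add: algebra_simps scaleR_2 flip: scaleR_add_left)
        also have "g z - f z = d" unfolding gz fz d_def by simp
        finally show ?thesis unfolding z_def by (simp add: algebra_simps)
      qed
      then show ?case using z2 by simp
    qed
    have an: "\<alpha> \<noteq> 0" using a zR by auto
    have "inj (\<lambda>n::nat. y + (real n * d) *\<^sub>R \<alpha>)"
      by (rule injI) (use dn an in auto)
    moreover have "range (\<lambda>n::nat. y + (real n * d) *\<^sub>R \<alpha>) \<subseteq> R" using mem by auto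
    ultimately have "finite (UNIV :: nat set)" using finR inj_on_finite by blast
    then show False by simp
  qed
  have "(\<lambda>y. f y - g y) x = 0"
    by (rule linear_eq_0_on_span[where b=R]) (use lf lg onR x spanR in \<open>auto intro: linear_compose_sub\<close>)
  then show ?thesis by simp
qed

definition sg :: "'a \<Rightarrow> 'a \<Rightarrow> 'a" where "sg a x = x - cr a x *\<^sub>R a"

lemma sg_lin: "a \<in> R \<Longrightarrow> linear (sg a)"
proof -
  assume a: "a \<in> R"
  show ?thesis unfolding sg_def[abs_def]
    by (rule linearI) (auto simp: linear_add[OF cr_lin[OF a]] linear_scale[OF cr_lin[OF a]] algebra_simps)
qed

lemma aV: "a \<in> R \<Longrightarrow> a \<in> V" using RV by auto

lemma sg_self[simp]: "a \<in> R \<Longrightarrow> sg a a = - a"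
  unfolding sg_def using cr_2 by (simp add: scaleR_2)

lemma sg_inv[simp]: "a \<in> R \<Longrightarrow> sg a (sg a x) = x"
proof -
  assume a: "a \<in> R"
  have "cr a (x - cr a x *\<^sub>R a) = cr a x - cr a x * 2"
    using linear_diff[OF cr_lin[OF a]] linear_scale[OF cr_lin[OF a]] cr_2[OF a] by simp
  then show ?thesis unfolding sg_def by (simp add: algebra_simps scaleR_2 flip: scaleR_add_left)
qed

lemma sg_R: "a \<in> R \<Longrightarrow> x \<in> R \<Longrightarrow> sg a x \<in> R"
  unfolding sg_def using cr_R by blast

lemma sg_V: "a \<in> R \<Longrightarrow> x \<in> V \<Longrightarrow> sg a x \<in> V"
  unfolding sg_def using subV aV by (auto intro!: subspace_diff subspace_scale)

lemma neg_R: "a \<in> R \<Longrightarrow> - a \<in> R"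
  using sg_R[of a a] by simp

lemma sg_add: "a \<in> R \<Longrightarrow> sg a (x + y) = sg a x + sg a y"
  using linear_add[OF sg_lin] by blast
lemma sg_diff: "a \<in> R \<Longrightarrow> sg a (x - y) = sg a x - sg a y"
  using linear_diff[OF sg_lin] by blast
lemma sg_scale: "a \<in> R \<Longrightarrow> sg a (c *\<^sub>R x) = c *\<^sub>R sg a x"
  using linear_scale[OF sg_lin] by blast
lemma sg_neg: "a \<in> R \<Longrightarrow> sg a (- x) = - sg a x"
  using linear_neg[OF sg_lin] by blast

lemma refl_eq: "refl V R a = restrict (sg a) V"
  unfolding refl_def sg_def cr_def ..

lemma cr_conj:
  assumes a: "a \<in> R" and b: "b \<in> R" and x: "x \<in> V"
  shows "cr (sg a b) x = cr b (sg a x)"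
proof (rule uniq[OF sg_R[OF a b] cr_lin[OF sg_R[OF a b]] _ cr_2[OF sg_R[OF a b]] _ cr_R[OF sg_R[OF a b]] _ x])
  show "linear (\<lambda>x. cr b (sg a x))"
    using linear_compose[OF sg_lin[OF a] cr_lin[OF b]] by (simp add: o_def)
  show "cr b (sg a (sg a b)) = 2" using a b cr_2 by simp
  fix y assume y: "y \<in> R"
  have "y - cr b (sg a y) *\<^sub>R sg a b = sg a (sg b (sg a y))"
    unfolding sg_def[of b] using a by (simp add: sg_diff sg_scale)
  then show "y - cr b (sg a y) *\<^sub>R sg a b \<in> R" using sg_R a b y by simp
qed

lemma sg_conj:
  assumes a: "a \<in> R" and b: "b \<in> R" and x: "x \<in> V"
  shows "sg (sg a b) x = sg a (sg b (sg a x))"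
  unfolding sg_def[of "sg a b"] cr_conj[OF a b x]
  unfolding sg_def[of b] using a by (simp add: sg_diff sg_scale)

lemma cr_negr:
  assumes a: "a \<in> R" and x: "x \<in> V"
  shows "cr (- a) x = - cr a x"
proof (rule uniq[OF neg_R[OF a] cr_lin[OF neg_R[OF a]] _ cr_2[OF neg_R[OF a]] _ cr_R[OF neg_R[OF a]] _ x])
  show "linear (\<lambda>x. - cr a x)" using cr_lin[OF a] by (simp add: linear_compose_neg)
  show "- cr a (- a) = 2" using linear_neg[OF cr_lin[OF a]] cr_2[OF a] by simp
  fix y assume "y \<in> R"
  then show "y - (- cr a y) *\<^sub>R - a \<in> R" using cr_R[OF a] by simp
qed

lemma sg_negr: "a \<in> R \<Longrightarrow> x \<in> V \<Longrightarrow> sg (- a) x = sg a x"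
  unfolding sg_def using cr_negr by simp

definition ev :: "'a list \<Rightarrow> 'a \<Rightarrow> 'a" where "ev ws = foldr (\<lambda>c f. sg c \<circ> f) ws id"

lemma ev_Nil[simp]: "ev [] = id" unfolding ev_def by simp
lemma ev_Cons[simp]: "ev (c # cs) = sg c \<circ> ev cs" unfolding ev_def by simp
lemma ev_append[simp]: "ev (xs @ ys) = ev xs \<circ> ev ys"
  by (induction xs) auto
lemma ev_Cons_app: "ev (c # cs) x = sg c (ev cs x)" by simp
lemma ev_snoc: "ev (cs @ [c]) x = ev cs (sg c x)" by simp

lemma ev_lin: "set ws \<subseteq> R \<Longrightarrow> linear (ev ws)"
  by (induction ws) (auto intro: linear_compose sg_lin simp: linear_id)

lemma ev_R: "set ws \<subseteq> R \<Longrightarrow> x \<in> R \<Longrightarrow> ev ws x \<in> R"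
  by (induction ws) (auto intro: sg_R)

lemma ev_V: "set ws \<subseteq> R \<Longrightarrow> x \<in> V \<Longrightarrow> ev ws x \<in> V"
  by (induction ws) (auto intro: sg_V)

lemma ev_rev: "set ws \<subseteq> R \<Longrightarrow> ev (rev ws) (ev ws x) = x"
  by (induction ws arbitrary: x) auto

lemma ev_rev2: "set ws \<subseteq> R \<Longrightarrow> ev ws (ev (rev ws) x) = x"
  using ev_rev[of "rev ws"] by simp

lemma ev_conj:
  assumes ws: "set ws \<subseteq> R" and b: "b \<in> R"
  shows "x \<in> V \<Longrightarrow> sg (ev ws b) x = ev ws (sg b (ev (rev ws) x))"
  using ws
proof (induction ws arbitrary: x)
  case Nil then show ?case by simp
next
  case (Cons c cs)
  have c: "c \<in> R" and cs: "set cs \<subseteq> R" using Cons by auto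
  have "sg (ev (c # cs) b) x = sg c (sg (ev cs b) (sg c x))"
    using sg_conj[OF c ev_R[OF cs b] Cons.prems(1)] by simp
  also have "\<dots> = sg c (ev cs (sg b (ev (rev cs) (sg c x))))"
    using Cons.IH[OF sg_V[OF c Cons.prems(1)] cs] by simp
  finally show ?case by simp
qed

lemma ev_neg: "set ws \<subseteq> R \<Longrightarrow> ev ws (- x) = - ev ws x"
  using ev_lin linear_neg by blast

end

locale rsys = rs0 +
  assumes red: "reduced R"
begin

lemma red_prop: "a \<in> R \<Longrightarrow> c *\<^sub>R a \<in> R \<Longrightarrow> c = 1 \<or> c = -1"
  using red unfolding reduced_def by blast

end

context rs0 begin

lemma map_inv_sg: assumes b: "b \<in> R" shows "map_inv V (restrict (sg b) V) = restrict (sg b) V"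
proof -
  have inj: "inj_on (restrict (sg b) V) V"
    by (rule inj_onI) (metis b restrict_apply' sg_inv)
  show ?thesis unfolding map_inv_def
  proof (rule restrict_ext)
    fix y assume y: "y \<in> V"
    have "inv_into V (restrict (sg b) V) y = sg b y"
      by (rule inv_into_f_eq[OF inj sg_V[OF b y]]) (use b y sg_V in simp)
    then show "inv_into V (restrict (sg b) V) y = sg b y" .
  qed
qed

lemma compose_sg: assumes b: "b \<in> R" and ws: "set ws \<subseteq> R"
  shows "compose V (restrict (sg b) V) (restrict (ev ws) V) = restrict (ev (b # ws)) V"
  unfolding compose_def by (rule restrict_ext) (use ev_V[OF ws] in simp)


lemma wsR0: "B \<subseteq> R \<Longrightarrow> set ws \<subseteq> B \<Longrightarrow> set ws \<subseteq> R" by auto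

lemma gen_eq: assumes BR: "B \<subseteq> R" shows "gen_group V (refl V R ` B) = {restrict (ev ws) V | ws. set ws \<subseteq> B}" (is "_ = ?G")
proof
  show "gen_group V (refl V R ` B) \<subseteq> ?G"
  proof
    fix g assume "g \<in> gen_group V (refl V R ` B)"
    then show "g \<in> ?G"
    proof induction
      case gen_id then show ?case  by (auto intro!: exI[of _ "[]"])
    next
      case (gen_mult g s)
      then obtain ws b where g: "g = restrict (ev ws) V" "set ws \<subseteq> B" and s: "s = restrict (sg b) V" "b \<in> B"
        unfolding refl_eq by blast
      then have "compose V s g = restrict (ev (b # ws)) V" using compose_sg[of b ws] BR g s by (simp add: subset_iff)
      then show ?case  using g s by (auto intro!: exI[of _ "b # ws"])
    next
      case (gen_inv g s)
      then obtain ws b where g: "g = restrict (ev ws) V" "set ws \<subseteq> B" and s: "s = restrict (sg b) V" "b \<in> B"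
        unfolding refl_eq by blast
      then have "compose V (map_inv V s) g = restrict (ev (b # ws)) V" using compose_sg[of b ws] map_inv_sg[of b] BR g s by (simp add: subset_iff)
      then show ?case  using g s by (auto intro!: exI[of _ "b # ws"])
    qed
  qed
  show "?G \<subseteq> gen_group V (refl V R ` B)"
  proof
    fix g assume "g \<in> ?G"
    then obtain ws where g: "g = restrict (ev ws) V" "set ws \<subseteq> B"  by auto
    have "restrict (ev ws) V \<in> gen_group V (refl V R ` B)" using g(2)
    proof (induction ws)
      case Nil then show ?case by (simp only: ev_Nil) (rule gen_id)
    next
      case (Cons b ws)
      have ih: "restrict (ev ws) V \<in> gen_group V (refl V R ` B)"
        by (rule Cons.IH) (use Cons.prems in auto)
      have m: "compose V (refl V R b) (restrict (ev ws) V) \<in> gen_group V (refl V R ` B)"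
        by (rule gen_mult[OF ih]) (use Cons.prems in auto)
      have e: "compose V (refl V R b) (restrict (ev ws) V) = restrict (ev (b # ws)) V"
        unfolding refl_eq using compose_sg[of b ws] Cons.prems BR by auto
      from m show ?case unfolding e .
    qed
    then show "g \<in> gen_group V (refl V R ` B)" using g by simp
  qed
qed

end

locale rsB = rsys +
  fixes B assumes BR: "B \<subseteq> R"
begin

definition G where "G = {restrict (ev ws) V | ws. set ws \<subseteq> B}"
definition Rp where "Rp = {ev ws b | ws b. set ws \<subseteq> B \<and> b \<in> B}"

lemma wsR: "set ws \<subseteq> B \<Longrightarrow> set ws \<subseteq> R" using BR by auto

lemma gen_G: "gen_group V (refl V R ` B) = G"
  unfolding G_def using gen_eq[OF BR] .

lemma Rp_eq: "{w \<beta> | w \<beta>. w \<in> G \<and> \<beta> \<in> B} = Rp"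
proof
  show "{w \<beta> | w \<beta>. w \<in> G \<and> \<beta> \<in> B} \<subseteq> Rp"
  proof
    fix x assume "x \<in> {w \<beta> | w \<beta>. w \<in> G \<and> \<beta> \<in> B}"
    then obtain ws \<beta> where "x = restrict (ev ws) V \<beta>" "set ws \<subseteq> B" "\<beta> \<in> B" unfolding G_def by auto
    then show "x \<in> Rp" unfolding Rp_def using BR aV by auto
  qed
  show "Rp \<subseteq> {w \<beta> | w \<beta>. w \<in> G \<and> \<beta> \<in> B}"
  proof
    fix x assume "x \<in> Rp"
    then obtain ws \<beta> where x: "x = ev ws \<beta>" "set ws \<subseteq> B" "\<beta> \<in> B" unfolding Rp_def by auto
    then have "x = restrict (ev ws) V \<beta>" "restrict (ev ws) V \<in> G" using BR aV unfolding G_def by auto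
    then show "x \<in> {w \<beta> | w \<beta>. w \<in> G \<and> \<beta> \<in> B}" using x by blast
  qed
qed

lemma ev_eq_on_V:
  assumes ws: "set ws \<subseteq> R" and vs: "set vs \<subseteq> R" and eq: "\<And>x. x \<in> R \<Longrightarrow> ev ws x = ev vs x"
    and x: "x \<in> V"
  shows "ev ws x = ev vs x"
proof -
  have "(\<lambda>x. ev ws x - ev vs x) x = 0"
    by (rule linear_eq_0_on_span[where b=R]) (use ev_lin[OF ws] ev_lin[OF vs] eq x spanR in \<open>auto intro: linear_compose_sub\<close>)
  then show ?thesis by simp
qed

lemma finite_G: "finite G"
proof (rule inj_on_finite[where f="\<lambda>g. restrict g R" and B="PiE R (\<lambda>_. R)"])
  show "inj_on (\<lambda>g. restrict g R) G"
  proof (rule inj_onI)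
    fix g1 g2 assume g1: "g1 \<in> G" and g2: "g2 \<in> G" and eq: "restrict g1 R = restrict g2 R"
    obtain ws1 where w1: "g1 = restrict (ev ws1) V" "set ws1 \<subseteq> B" using g1 unfolding G_def by auto
    obtain ws2 where w2: "g2 = restrict (ev ws2) V" "set ws2 \<subseteq> B" using g2 unfolding G_def by auto
    have "\<And>x. x \<in> R \<Longrightarrow> ev ws1 x = ev ws2 x"
    proof -
      fix x assume x: "x \<in> R"
      have "restrict g1 R x = restrict g2 R x" using eq by simp
      then show "ev ws1 x = ev ws2 x" using x w1 w2 aV by simp
    qed
    then show "g1 = g2" unfolding w1 w2 using ev_eq_on_V[OF wsR[OF w1(2)] wsR[OF w2(2)]]
      by (intro restrict_ext) auto
  qed
  show "(\<lambda>g. restrict g R) ` G \<subseteq> PiE R (\<lambda>_. R)"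
    unfolding G_def using ev_R wsR aV by auto
  show "finite (PiE R (\<lambda>_. R))" using finR by (simp add: finite_PiE)
qed

lemma Rp_R: "Rp \<subseteq> R" unfolding Rp_def using ev_R wsR BR by auto

lemma finite_Rp: "finite Rp" using Rp_R finR finite_subset by blast

definition ip :: "'a \<Rightarrow> 'a \<Rightarrow> real" where "ip x y = (\<Sum>g\<in>G. inner (g x) (g y))"

lemma G_lin: assumes g: "g \<in> G" and x: "x \<in> V" and y: "y \<in> V"
  shows "g (x + y) = g x + g y" and "g (c *\<^sub>R x) = c *\<^sub>R g x" and "g (x - y) = g x - g y"
proof -
  obtain ws where w: "g = restrict (ev ws) V" "set ws \<subseteq> B" using g unfolding G_def by auto
  have l: "linear (ev ws)" using ev_lin wsR w by auto
  have "x + y \<in> V" "c *\<^sub>R x \<in> V" "x - y \<in> V" using x y subV by (auto intro: subspace_add subspace_scale subspace_diff)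
  then show "g (x + y) = g x + g y" and "g (c *\<^sub>R x) = c *\<^sub>R g x" and "g (x - y) = g x - g y"
    using x y w linear_add[OF l] linear_scale[OF l] linear_diff[OF l] by auto
qed

lemma ip_sym: "ip x y = ip y x" unfolding ip_def by (simp add: inner_commute)

lemma ip_add: "x \<in> V \<Longrightarrow> y \<in> V \<Longrightarrow> ip (x + y) z = ip x z + ip y z"
  unfolding ip_def by (simp add: G_lin inner_add_left sum.distrib)
lemma ip_diff: "x \<in> V \<Longrightarrow> y \<in> V \<Longrightarrow> ip (x - y) z = ip x z - ip y z"
  unfolding ip_def by (simp add: G_lin inner_diff_left sum_subtractf)
lemma ip_scale: "x \<in> V \<Longrightarrow> ip (c *\<^sub>R x) z = c * ip x z"
  unfolding ip_def by (simp add: G_lin sum_distrib_left)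
lemma ip_add2: "x \<in> V \<Longrightarrow> y \<in> V \<Longrightarrow> ip z (x + y) = ip z x + ip z y"
  using ip_add ip_sym by metis
lemma ip_diff2: "x \<in> V \<Longrightarrow> y \<in> V \<Longrightarrow> ip z (x - y) = ip z x - ip z y"
  using ip_diff ip_sym by metis
lemma ip_scale2: "x \<in> V \<Longrightarrow> ip z (c *\<^sub>R x) = c * ip z x"
  using ip_scale ip_sym by metis

lemma id_G: "restrict id V \<in> G" unfolding G_def by (auto intro!: exI[of _ "[]"])

lemma ip_pos: assumes x: "x \<in> V" "x \<noteq> 0" shows "ip x x > 0"
proof -
  have "ip x x = (\<Sum>g\<in>G. inner (g x) (g x))" unfolding ip_def ..
  also have "\<dots> \<ge> inner (restrict id V x) (restrict id V x)"
    by (rule member_le_sum[OF id_G _ finite_G]) simp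
  finally have i: "inner (restrict id V x) (restrict id V x) \<le> ip x x" .
  have "inner (restrict id V x) (restrict id V x) > 0" using x by simp
  then show ?thesis using i by linarith
qed

lemma ip_nonneg: "ip x x \<ge> 0" unfolding ip_def by (simp add: sum_nonneg)

lemma ip_inv1: assumes b: "b \<in> B" and x: "x \<in> V" and y: "y \<in> V"
  shows "ip (sg b x) (sg b y) = ip x y"
proof -
  have bR: "b \<in> R" using b BR by auto
  define \<Phi> where "\<Phi> g = restrict (\<lambda>x. g (sg b x)) V" for g :: "'a \<Rightarrow> 'a"
  have \<Phi>G: "\<Phi> ` G \<subseteq> G"
  proof
    fix h assume "h \<in> \<Phi> ` G"
    then obtain ws where h: "h = \<Phi> (restrict (ev ws) V)" "set ws \<subseteq> B" unfolding G_def by auto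
    have "h = restrict (ev (ws @ [b])) V" unfolding h \<Phi>_def
      by (rule restrict_ext) (use sg_V[OF bR] in simp)
    then show "h \<in> G" unfolding G_def using h b by (auto intro!: exI[of _ "ws @ [b]"])
  qed
  have inj: "inj_on \<Phi> G"
  proof (rule inj_onI)
    fix g1 g2 assume g1: "g1 \<in> G" and g2: "g2 \<in> G" and eq: "\<Phi> g1 = \<Phi> g2"
    have ext1: "g1 \<in> extensional V" and ext2: "g2 \<in> extensional V" using g1 g2 unfolding G_def by auto
    show "g1 = g2"
    proof (rule extensionalityI[OF ext1 ext2])
      fix z assume z: "z \<in> V"
      have "\<Phi> g1 (sg b z) = \<Phi> g2 (sg b z)" using eq by simp
      then show "g1 z = g2 z" unfolding \<Phi>_def using sg_V[OF bR z] bR by simp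
    qed
  qed
  have img: "\<Phi> ` G = G" using endo_inj_surj[OF finite_G \<Phi>G inj] .
  have "ip (sg b x) (sg b y) = (\<Sum>g\<in>G. inner (\<Phi> g x) (\<Phi> g y))"
    unfolding ip_def \<Phi>_def using x y by simp
  also have "\<dots> = (\<Sum>g\<in>\<Phi> ` G. inner (g x) (g y))"
    using sum.reindex[OF inj, of "\<lambda>g. inner (g x) (g y)"] by simp
  also have "\<dots> = ip x y" unfolding img ip_def ..
  finally show ?thesis .
qed

lemma ip_inv: "set ws \<subseteq> B \<Longrightarrow> x \<in> V \<Longrightarrow> y \<in> V \<Longrightarrow> ip (ev ws x) (ev ws y) = ip x y"
proof (induction ws arbitrary: x y)
  case Nil then show ?case by simp
next
  case (Cons c cs)
  have "ip (ev (c # cs) x) (ev (c # cs) y) = ip (sg c (ev cs x)) (sg c (ev cs y))" by simp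
  also have "\<dots> = ip (ev cs x) (ev cs y)" using ip_inv1 Cons.prems ev_V wsR by auto
  also have "\<dots> = ip x y" using Cons by auto
  finally show ?case .
qed

lemma Rp_repr: "\<gamma> \<in> Rp \<Longrightarrow> \<exists>ws b. set ws \<subseteq> B \<and> b \<in> B \<and> \<gamma> = ev ws b"
  unfolding Rp_def by auto

lemma sg_Rp_word: assumes g: "\<gamma> \<in> Rp"
  obtains ws where "set ws \<subseteq> B" "\<And>x. x \<in> V \<Longrightarrow> sg \<gamma> x = ev ws x"
proof -
  obtain ws b where w: "set ws \<subseteq> B" "b \<in> B" "\<gamma> = ev ws b" using Rp_repr[OF g] by auto
  have "\<And>x. x \<in> V \<Longrightarrow> sg \<gamma> x = ev (ws @ [b] @ rev ws) x"
    using ev_conj[OF wsR[OF w(1)]] w BR by auto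
  then show ?thesis using that[of "ws @ [b] @ rev ws"] w by auto
qed

lemma ip_inv_sg: "\<gamma> \<in> Rp \<Longrightarrow> x \<in> V \<Longrightarrow> y \<in> V \<Longrightarrow> ip (sg \<gamma> x) (sg \<gamma> y) = ip x y"
  by (metis ip_inv sg_Rp_word)

lemma RpV: "\<gamma> \<in> Rp \<Longrightarrow> \<gamma> \<in> V" using Rp_R aV by auto

lemma cr_ip: assumes g: "\<gamma> \<in> Rp" and x: "x \<in> V"
  shows "cr \<gamma> x * ip \<gamma> \<gamma> = 2 * ip x \<gamma>"
proof -
  have gR: "\<gamma> \<in> R" using g Rp_R by auto
  have gV: "\<gamma> \<in> V" using RpV g by auto
  have "ip (sg \<gamma> x) (sg \<gamma> \<gamma>) = ip x \<gamma>" using ip_inv_sg g x gV by blast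
  then have "ip (x - cr \<gamma> x *\<^sub>R \<gamma>) (- \<gamma>) = ip x \<gamma>" using gR unfolding sg_def[of \<gamma> x] by simp
  moreover have "ip (x - cr \<gamma> x *\<^sub>R \<gamma>) (- \<gamma>) = - ip x \<gamma> + cr \<gamma> x * ip \<gamma> \<gamma>"
    using ip_diff[OF x subspace_scale[OF subV gV]] ip_scale[OF gV] ip_scale2[OF gV, of _ "-1"]
    by simp
  ultimately show ?thesis by simp
qed

lemma ip_pos_Rp: "\<gamma> \<in> Rp \<Longrightarrow> ip \<gamma> \<gamma> > 0"
  using ip_pos RpV Rp_R zR by blast

lemma cr_ip': "\<gamma> \<in> Rp \<Longrightarrow> x \<in> V \<Longrightarrow> cr \<gamma> x = 2 * ip x \<gamma> / ip \<gamma> \<gamma>"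
  using cr_ip ip_pos_Rp by (metis less_numeral_extra(3) nonzero_eq_divide_eq)

end

context rsB begin

lemma B_Rp: "B \<subseteq> Rp" unfolding Rp_def by (auto intro!: exI[of _ "[]"])

lemma Rp_ev: "set ws \<subseteq> B \<Longrightarrow> \<gamma> \<in> Rp \<Longrightarrow> ev ws \<gamma> \<in> Rp"
proof -
  assume ws: "set ws \<subseteq> B" and g: "\<gamma> \<in> Rp"
  then obtain vs b where "set vs \<subseteq> B" "b \<in> B" "\<gamma> = ev vs b" unfolding Rp_def by auto
  then show ?thesis unfolding Rp_def using ws by (auto intro!: exI[of _ "ws @ vs"])
qed

lemma sg_Rp: assumes a: "\<alpha> \<in> Rp" and b: "\<beta> \<in> Rp" shows "sg \<alpha> \<beta> \<in> Rp"
proof -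
  obtain ws where ws: "set ws \<subseteq> B" "\<And>x. x \<in> V \<Longrightarrow> sg \<alpha> x = ev ws x" using sg_Rp_word[OF a] by blast
  show ?thesis using ws RpV[OF b] Rp_ev[OF ws(1) b] by simp
qed

lemma neg_Rp: "\<alpha> \<in> Rp \<Longrightarrow> - \<alpha> \<in> Rp"
  using sg_Rp[of \<alpha> \<alpha>] Rp_R by auto

lemma word_Rp_B: "set ws \<subseteq> Rp \<Longrightarrow> \<exists>vs. set vs \<subseteq> B \<and> (\<forall>x\<in>V. ev ws x = ev vs x)"
proof (induction ws)
  case Nil then show ?case by (auto intro!: exI[of _ "[]"])
next
  case (Cons c cs)
  then obtain vs where vs: "set vs \<subseteq> B" "\<forall>x\<in>V. ev cs x = ev vs x" by auto
  obtain us where us: "set us \<subseteq> B" "\<And>x. x \<in> V \<Longrightarrow> sg c x = ev us x" using sg_Rp_word Cons.prems by auto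
  have "\<forall>x\<in>V. ev (c # cs) x = ev (us @ vs) x" using vs us ev_V wsR by simp
  then show ?case using vs us by (auto intro!: exI[of _ "us @ vs"])
qed

lemma spanRp_V: "span Rp \<subseteq> V"
  using span_mono[OF Rp_R] spanR by auto

theorem part1: "root_system (span Rp) Rp"
  unfolding root_system_def
proof (intro conjI ballI)
  show "subspace (span Rp)" by (rule subspace_span)
  show "finite Rp" by (rule finite_Rp)
  show "Rp \<subseteq> span Rp" by (rule span_superset)
  show "0 \<notin> Rp" using Rp_R zR by auto
  show "span Rp = span Rp" ..
  fix \<alpha> assume a: "\<alpha> \<in> Rp"
  then have aR: "\<alpha> \<in> R" using Rp_R by auto
  show "\<exists>f. coroot_cond Rp \<alpha> f"
    unfolding coroot_cond_def
    using cr_lin[OF aR] cr_2[OF aR] sg_Rp[OF a] cr_int[OF aR] Rp_R unfolding sg_def by blast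
qed

interpretation P: rs0 "span Rp" Rp by (unfold_locales) (rule part1)

lemma Pcr: assumes a: "\<alpha> \<in> Rp" and x: "x \<in> span Rp" shows "P.cr \<alpha> x = cr \<alpha> x"
proof -
  have aR: "\<alpha> \<in> R" using a Rp_R by auto
  have h: "y - cr \<alpha> y *\<^sub>R \<alpha> \<in> Rp" if "y \<in> Rp" for y
    using sg_Rp[OF a that] unfolding sg_def .
  show ?thesis
    by (rule P.uniq[OF a P.cr_lin[OF a] cr_lin[OF aR] P.cr_2[OF a] cr_2[OF aR] P.cr_R[OF a] h x])
qed

lemma Psg: "\<alpha> \<in> Rp \<Longrightarrow> x \<in> span Rp \<Longrightarrow> P.sg \<alpha> x = sg \<alpha> x"
  unfolding P.sg_def sg_def using Pcr by simp

lemma Pev: "set ws \<subseteq> Rp \<Longrightarrow> x \<in> span Rp \<Longrightarrow> P.ev ws x = ev ws x"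
proof (induction ws arbitrary: x)
  case Nil then show ?case by simp
next
  case (Cons c cs)
  have c: "c \<in> Rp" and cs: "set cs \<subseteq> Rp" using Cons.prems by auto
  have i: "P.ev cs x \<in> span Rp" using P.ev_V cs Cons.prems by auto
  have e: "P.ev cs x = ev cs x" using Cons.IH cs Cons.prems by auto
  show ?case using Psg[OF c i] e by simp
qed

theorem part2: "weyl (span Rp) Rp = (\<lambda>w. restrict w (span Rp)) ` G"
proof -
  have "weyl (span Rp) Rp = {restrict (P.ev ws) (span Rp) | ws. set ws \<subseteq> Rp}"
    unfolding weyl_def using P.gen_eq[OF subset_refl] .
  also have "\<dots> = {restrict (ev ws) (span Rp) | ws. set ws \<subseteq> Rp}"
    using Pev by (metis (no_types, lifting) restrict_ext)
  also have "\<dots> = {restrict (ev ws) (span Rp) | ws. set ws \<subseteq> B}"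
  proof
    show "{restrict (ev ws) (span Rp) | ws. set ws \<subseteq> Rp} \<subseteq> {restrict (ev ws) (span Rp) | ws. set ws \<subseteq> B}"
    proof
      fix g assume "g \<in> {restrict (ev ws) (span Rp) | ws. set ws \<subseteq> Rp}"
      then obtain ws where ws: "g = restrict (ev ws) (span Rp)" "set ws \<subseteq> Rp" by auto
      obtain vs where vs: "set vs \<subseteq> B" "\<forall>x\<in>V. ev ws x = ev vs x" using word_Rp_B[OF ws(2)] by auto
      have "g = restrict (ev vs) (span Rp)" unfolding ws using vs spanRp_V by (intro restrict_ext) auto
      then show "g \<in> {restrict (ev ws) (span Rp) | ws. set ws \<subseteq> B}" using vs by auto
    qed
    show "{restrict (ev ws) (span Rp) | ws. set ws \<subseteq> B} \<subseteq> {restrict (ev ws) (span Rp) | ws. set ws \<subseteq> Rp}"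
      using B_Rp by blast
  qed
  also have "\<dots> = (\<lambda>w. restrict w (span Rp)) ` G"
  proof -
    have e: "restrict (restrict (ev ws) V) (span Rp) = restrict (ev ws) (span Rp)" for ws
      using spanRp_V by (intro restrict_ext) auto
    show ?thesis unfolding G_def
    proof (intro equalityI subsetI)
      fix g assume "g \<in> {restrict (ev ws) (span Rp) |ws. set ws \<subseteq> B}"
      then obtain ws where "g = restrict (ev ws) (span Rp)" "set ws \<subseteq> B" by auto
      then show "g \<in> (\<lambda>w. restrict w (span Rp)) ` {restrict (ev ws) V |ws. set ws \<subseteq> B}"
        using e by (intro image_eqI[where x="restrict (ev ws) V"]) auto
    next
      fix g assume "g \<in> (\<lambda>w. restrict w (span Rp)) ` {restrict (ev ws) V |ws. set ws \<subseteq> B}"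
      then obtain ws where "g = restrict (restrict (ev ws) V) (span Rp)" "set ws \<subseteq> B" by auto
      then show "g \<in> {restrict (ev ws) (span Rp) |ws. set ws \<subseteq> B}" using e by auto
    qed
  qed
  finally show ?thesis .
qed

end

context rsB begin

lemma cs_strict:
  assumes x: "x \<in> V" and y: "y \<in> V" and y0: "y \<noteq> 0" and np: "\<forall>t. x \<noteq> t *\<^sub>R y"
  shows "(ip x y)^2 < ip x x * ip y y"
proof -
  have yy: "ip y y > 0" using ip_pos y y0 by auto
  define t where "t = ip x y / ip y y"
  define z where "z = x - t *\<^sub>R y"
  have zV: "z \<in> V" unfolding z_def using x y subV by (auto intro: subspace_diff subspace_scale)
  have z0: "z \<noteq> 0" unfolding z_def using np by auto
  have tyV: "t *\<^sub>R y \<in> V" using y subV by (auto intro: subspace_scale)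
  have e1: "ip z z = ip x z - t * ip y z"
    unfolding z_def[of] using ip_diff[OF x tyV, of z] ip_scale[OF y, of t z] by (simp add: z_def)
  have e2: "ip x z = ip x x - t * ip x y"
    unfolding z_def using ip_diff2[OF x tyV, of x] ip_scale2[OF y, of x t] by simp
  have e3: "ip y z = ip y x - t * ip y y"
    unfolding z_def using ip_diff2[OF x tyV, of y] ip_scale2[OF y, of y t] by simp
  have "ip z z = ip x x - 2 * t * ip x y + t * t * ip y y"
    unfolding e1 e2 e3 using ip_sym[of x y] by (simp add: algebra_simps)
  also have "\<dots> = ip x x - (ip x y)^2 / ip y y"
    unfolding t_def using yy by (simp add: field_simps power2_eq_square)
  finally have "ip x x - (ip x y)^2 / ip y y > 0" using ip_pos[OF zV z0] by simp
  then have "(ip x y)^2 / ip y y < ip x x" by simp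
  then show ?thesis using yy by (simp add: divide_less_eq mult.commute)
qed

lemma Rp_ne0: "a \<in> Rp \<Longrightarrow> a \<noteq> 0" using Rp_R zR by auto

lemma pq_lt4:
  assumes a: "a \<in> Rp" and b: "b \<in> Rp" and np: "\<forall>t. a \<noteq> t *\<^sub>R b"
  shows "cr a b * cr b a < 4"
proof -
  have aa: "ip a a > 0" and bb: "ip b b > 0" using ip_pos_Rp a b by auto
  have cs: "(ip a b)^2 < ip a a * ip b b" using cs_strict[OF RpV[OF a] RpV[OF b] Rp_ne0[OF b] np] .
  have "cr a b * cr b a = 4 * (ip a b)^2 / (ip a a * ip b b)"
    using cr_ip'[OF a RpV[OF b]] cr_ip'[OF b RpV[OF a]] ip_sym[of a b] by (simp add: power2_eq_square)
  also have "\<dots> < 4" using cs aa bb by (simp add: divide_less_eq)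
  finally show ?thesis .
qed

lemma cr_Int: "a \<in> Rp \<Longrightarrow> b \<in> Rp \<Longrightarrow> cr a b \<in> \<int>" using cr_int Rp_R by auto

lemma pq_le3:
  assumes a: "a \<in> Rp" and b: "b \<in> Rp" and np: "\<forall>t. a \<noteq> t *\<^sub>R b"
  shows "cr a b * cr b a \<le> 3"
proof -
  obtain i where i: "cr a b = of_int i" using cr_Int[OF a b] Ints_cases by metis
  obtain j where j: "cr b a = of_int j" using cr_Int[OF b a] Ints_cases by metis
  have "of_int (i * j) < (4::real)" using pq_lt4[OF a b np] i j by simp
  then have "i * j \<le> 3" by linarith
  then show ?thesis using i j by (metis of_int_le_iff of_int_mult of_int_numeral)
qed

lemma cr_sign:
  assumes a: "a \<in> Rp" and b: "b \<in> Rp"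
  shows "cr a b > 0 \<longleftrightarrow> ip a b > 0" and "cr a b < 0 \<longleftrightarrow> ip a b < 0" and "cr a b = 0 \<longleftrightarrow> ip a b = 0"
proof -
  have aa: "ip a a > 0" using ip_pos_Rp a by auto
  have e: "cr a b = 2 * ip a b / ip a a" using cr_ip'[OF a RpV[OF b]] ip_sym[of a b] by simp
  show "cr a b > 0 \<longleftrightarrow> ip a b > 0" "cr a b < 0 \<longleftrightarrow> ip a b < 0" "cr a b = 0 \<longleftrightarrow> ip a b = 0"
    unfolding e using aa by (auto simp: zero_less_divide_iff divide_less_0_iff)
qed

end

locale rsO = rsB +
  fixes le :: "'a \<Rightarrow> 'a \<Rightarrow> bool"
  assumes vso: "vs_total_order V le" and Bpos: "B \<subseteq> pos_roots le R"
begin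

lemma vs_tot: "x \<in> V \<Longrightarrow> y \<in> V \<Longrightarrow> le x y \<or> le y x"
  and vs_sub: "x \<in> V \<Longrightarrow> y \<in> V \<Longrightarrow> le y x \<longleftrightarrow> le 0 (x - y)"
  and vs_add: "x \<in> V \<Longrightarrow> y \<in> V \<Longrightarrow> lt_of le 0 x \<Longrightarrow> lt_of le 0 y \<Longrightarrow> lt_of le 0 (x + y)"
  and vs_scale: "x \<in> V \<Longrightarrow> lt_of le 0 x \<Longrightarrow> c > 0 \<Longrightarrow> lt_of le 0 (c *\<^sub>R x)"
  using vso unfolding vs_total_order_def by blast+

lemma zV: "0 \<in> V" using subV subspace_0 by auto

lemma pos_sum:
  assumes F: "finite F" "F \<noteq> {}" "F \<subseteq> V" "\<forall>x\<in>F. lt_of le 0 x" and u: "\<forall>x\<in>F. u x > 0"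
  shows "lt_of le 0 (\<Sum>x\<in>F. u x *\<^sub>R x) \<and> (\<Sum>x\<in>F. u x *\<^sub>R x) \<in> V"
  using F u
proof (induction F rule: finite_ne_induct)
  case (singleton x) then show ?case using vs_scale subV by (auto intro: subspace_scale)
next
  case (insert x F)
  have xV: "u x *\<^sub>R x \<in> V" using insert subV by (auto intro: subspace_scale)
  have p: "lt_of le 0 (u x *\<^sub>R x)" using vs_scale insert by auto
  have ih: "lt_of le 0 (\<Sum>x\<in>F. u x *\<^sub>R x) \<and> (\<Sum>x\<in>F. u x *\<^sub>R x) \<in> V" using insert by auto
  show ?case using vs_add[OF xV _ p] ih xV insert subV by (auto intro: subspace_add)
qed

lemma h_exists: "\<exists>c. \<forall>\<gamma>\<in>pos_roots le R. inner c \<gamma> > 0"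
proof (cases "pos_roots le R = {}")
  case True then show ?thesis by auto
next
  case False
  define P where "P = pos_roots le R"
  have finP: "finite P" unfolding P_def pos_roots_def using finR by auto
  have PV: "P \<subseteq> V" unfolding P_def pos_roots_def using RV by auto
  have Ppos: "\<forall>x\<in>P. lt_of le 0 x" unfolding P_def pos_roots_def by auto
  have "0 \<notin> convex hull P"
  proof
    assume "0 \<in> convex hull P"
    then obtain u where u: "\<forall>x\<in>P. 0 \<le> u x" "sum u P = 1" "(\<Sum>x\<in>P. u x *\<^sub>R x) = 0"
      using convex_hull_finite[OF finP] by auto
    define F where "F = {x\<in>P. u x > 0}"
    have finF: "finite F" using finP F_def by auto
    have "F \<noteq> {}"
    proof
      assume "F = {}"
      then have "\<forall>x\<in>P. u x = 0" using u(1) F_def by force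
      then show False using u(2) by simp
    qed
    have eq: "(\<Sum>x\<in>P. u x *\<^sub>R x) = (\<Sum>x\<in>F. u x *\<^sub>R x)"
      unfolding F_def by (rule sum.mono_neutral_right) (use finP u(1) in force)+
    have "lt_of le 0 (\<Sum>x\<in>F. u x *\<^sub>R x)"
      using pos_sum[OF finF \<open>F \<noteq> {}\<close>] PV Ppos F_def by auto
    then show False using u(3) eq unfolding lt_of_def by simp
  qed
  moreover have "convex (convex hull P)" by (rule convex_convex_hull)
  moreover have "closed (convex hull P)" using finP by (simp add: compact_imp_closed finite_imp_compact_convex_hull)
  ultimately obtain a b where ab: "a \<noteq> 0" "0 < b" "\<forall>x\<in>convex hull P. b < inner a x"
    using separating_hyperplane_closed_0 by blast
  have "\<forall>\<gamma>\<in>P. inner a \<gamma> > 0" using ab hull_subset[of P convex] by fastforce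
  then show ?thesis unfolding P_def by blast
qed

definition hc where "hc = (SOME c. \<forall>\<gamma>\<in>pos_roots le R. inner c \<gamma> > 0)"
definition h where "h x = inner hc x"

lemma h_pos_roots: "\<gamma> \<in> pos_roots le R \<Longrightarrow> h \<gamma> > 0"
  unfolding h_def hc_def using someI_ex[OF h_exists] by blast

lemma h_add: "h (x + y) = h x + h y" and h_scale: "h (c *\<^sub>R x) = c * h x"
  and h_neg: "h (- x) = - h x" and h_diff: "h (x - y) = h x - h y"
  and h_sum: "h (sum f F) = (\<Sum>x\<in>F. h (f x))"
  unfolding h_def by (auto simp: inner_add_right inner_diff_right inner_sum_right)

lemma pos_or_neg: assumes g: "\<gamma> \<in> R" shows "lt_of le 0 \<gamma> \<or> lt_of le 0 (- \<gamma>)"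
proof -
  have gV: "\<gamma> \<in> V" using g aV by auto
  have g0: "\<gamma> \<noteq> 0" using g zR by auto
  have "le 0 \<gamma> \<or> le \<gamma> 0" using vs_tot[OF zV gV] by auto
  moreover have "le \<gamma> 0 \<longleftrightarrow> le 0 (- \<gamma>)" using vs_sub[OF zV gV] by simp
  ultimately show ?thesis unfolding lt_of_def using g0 by auto
qed

lemma pos_iff_h: assumes g: "\<gamma> \<in> R" shows "lt_of le 0 \<gamma> \<longleftrightarrow> h \<gamma> > 0"
proof
  assume "lt_of le 0 \<gamma>" then show "h \<gamma> > 0" using h_pos_roots g unfolding pos_roots_def by auto
next
  assume hg: "h \<gamma> > 0"
  show "lt_of le 0 \<gamma>"
  proof (rule ccontr)
    assume "\<not> lt_of le 0 \<gamma>"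
    then have "lt_of le 0 (- \<gamma>)" using pos_or_neg g by auto
    then have "h (- \<gamma>) > 0" using h_pos_roots neg_R g unfolding pos_roots_def by auto
    then show False using hg h_neg by simp
  qed
qed

lemma h_ne0: "\<gamma> \<in> R \<Longrightarrow> h \<gamma> \<noteq> 0"
  using pos_or_neg pos_iff_h neg_R h_neg by fastforce

lemma pos_Rp: "pos_roots le Rp = {\<gamma>\<in>Rp. h \<gamma> > 0}"
  unfolding pos_roots_def using pos_iff_h Rp_R by auto

lemma B_hpos: "b \<in> B \<Longrightarrow> h b > 0"
  using Bpos h_pos_roots by auto

lemma nonprop:
  assumes a: "a \<in> R" and b: "b \<in> R" and ha: "h a > 0" and hb: "h b > 0" and ne: "a \<noteq> b"
  shows "\<forall>t. a \<noteq> t *\<^sub>R b"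
proof
  fix t show "a \<noteq> t *\<^sub>R b"
  proof
    assume e: "a = t *\<^sub>R b"
    then have "t = 1 \<or> t = -1" using red_prop[OF b] a by auto
    then show False using e ne ha hb h_scale[of t b] by auto
  qed
qed

end

fun alt :: "nat \<Rightarrow> 'b \<Rightarrow> 'b \<Rightarrow> 'b list" where
  "alt 0 x y = []"
| "alt (Suc k) x y = alt k y x @ [x]"

lemma alt_set: "set (alt k x y) \<subseteq> {x, y}"
  by (induction k arbitrary: x y) auto

lemma alt_len[simp]: "length (alt k x y) = k"
  by (induction k arbitrary: x y) auto

lemma alt_split: "alt (j + n) x y = alt j (if even n then x else y) (if even n then y else x) @ alt n x y"
  by (induction n arbitrary: x y) auto

lemma alt_map: "map f (alt k x y) = alt k (f x) (f y)"
  by (induction k arbitrary: x y) auto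

definition noadj :: "'b list \<Rightarrow> bool" where
  "noadj ws \<longleftrightarrow> (\<forall>i. Suc i < length ws \<longrightarrow> ws ! i \<noteq> ws ! Suc i)"

lemma noadj_butlast: assumes "noadj (vs @ [c])" shows "noadj vs"
  unfolding noadj_def
proof (intro allI impI)
  fix i assume i: "Suc i < length vs"
  then have "(vs @ [c]) ! i \<noteq> (vs @ [c]) ! Suc i" using assms unfolding noadj_def by auto
  then show "vs ! i \<noteq> vs ! Suc i" using i by (simp add: nth_append)
qed

lemma alt_noadj:
  "\<forall>x y. x \<noteq> y \<longrightarrow> set ws \<subseteq> {x, y} \<longrightarrow> noadj ws \<longrightarrow> ws \<noteq> [] \<longrightarrow> last ws = x \<longrightarrow> ws = alt (length ws) x y"
proof (induction ws rule: rev_induct)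
  case Nil then show ?case by simp
next
  case (snoc c vs)
  show ?case
  proof (intro allI impI)
    fix x y assume xy: "x \<noteq> y" and s: "set (vs @ [c]) \<subseteq> {x, y}" and na: "noadj (vs @ [c])"
      and ne: "vs @ [c] \<noteq> []" and l: "last (vs @ [c]) = x"
    have cx: "c = x" using l by simp
    show "vs @ [c] = alt (length (vs @ [c])) x y"
    proof (cases "vs = []")
      case True then show ?thesis using cx by simp
    next
      case False
      have lv: "last vs \<noteq> c"
      proof -
        have "vs ! (length vs - 1) \<noteq> (vs @ [c]) ! length vs"
          using na False unfolding noadj_def
          by (metis (no_types, lifting) Suc_pred' append_Nil2 length_append_singleton length_greater_0_conv lessI nth_append)
        then show ?thesis using False by (simp add: last_conv_nth)
      qed
      have ly: "last vs = y" using lv s False cx by (metis insert_iff last_in_set set_append singletonD subset_iff UnI1)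
      have "vs = alt (length vs) y x"
        by (rule snoc.IH[rule_format]) (use xy s noadj_butlast[OF na] False ly in auto)
      then show ?thesis using cx by simp
    qed
  qed
qed

fun coef :: "real \<Rightarrow> real \<Rightarrow> bool list \<Rightarrow> real \<times> real \<times> real \<times> real" where
  "coef c1 c2 [] = (0, 0, 0, 0)"
| "coef c1 c2 (True # bs) = (case coef c1 c2 bs of (p1, p2, q1, q2) \<Rightarrow>
     (- p1 - 1 - c1 * q1, - p2 - c1 * q2, q1, q2))"
| "coef c1 c2 (False # bs) = (case coef c1 c2 bs of (p1, p2, q1, q2) \<Rightarrow>
     (p1, p2, - q1 - c2 * p1, - q2 - 1 - c2 * p2))"

definition okpair :: "real \<Rightarrow> real \<Rightarrow> bool" where
  "okpair c1 c2 \<longleftrightarrow> (c1, c2) \<in> {(0, 0), (-1, -1), (-1, -2), (-2, -1), (-1, -3), (-3, -1)}"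

definition mm :: "real \<Rightarrow> real \<Rightarrow> nat" where
  "mm c1 c2 = (if c1 * c2 = 0 then 2 else if c1 * c2 = 1 then 3 else if c1 * c2 = 2 then 4 else 6)"

lemma braid_coef: "okpair c1 c2 \<Longrightarrow> coef c1 c2 (alt (mm c1 c2) False True) = coef c1 c2 (alt (mm c1 c2) True False)"
  unfolding okpair_def mm_def by (auto simp: eval_nat_numeral)

lemma cone_coef:
  assumes "okpair c1 c2" "k < mm c1 c2"
  shows "case coef c1 c2 (alt k False True) of (p1, p2, q1, q2) \<Rightarrow> 1 + 2 * p1 + c2 * p2 \<ge> 0 \<and> 2 * q1 + c2 * q2 \<ge> 0"
proof -
  have "k < 6" using assms(2) unfolding mm_def by (auto split: if_splits)
  then have "k = 0 \<or> k = 1 \<or> k = 2 \<or> k = 3 \<or> k = 4 \<or> k = 5" by auto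
  then show ?thesis using assms unfolding okpair_def mm_def by (auto simp: eval_nat_numeral)
qed

lemma mm_pos: "mm c1 c2 > 0" unfolding mm_def by auto


context rs0 begin

definition eqV :: "'a list \<Rightarrow> 'a list \<Rightarrow> bool" where
  "eqV ws vs \<longleftrightarrow> (\<forall>x\<in>V. ev ws x = ev vs x)"

definition L :: "'a set \<Rightarrow> 'a list \<Rightarrow> nat" where
  "L X ws = (LEAST n. \<exists>vs. set vs \<subseteq> X \<and> length vs = n \<and> eqV vs ws)"

lemma eqV_refl[simp]: "eqV ws ws" unfolding eqV_def by auto
lemma eqV_sym: "eqV ws vs \<Longrightarrow> eqV vs ws" unfolding eqV_def by auto
lemma eqV_trans: "eqV ws vs \<Longrightarrow> eqV vs us \<Longrightarrow> eqV ws us" unfolding eqV_def by auto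

lemma L_le: "set vs \<subseteq> X \<Longrightarrow> eqV vs ws \<Longrightarrow> L X ws \<le> length vs"
  unfolding L_def by (rule Least_le) auto

lemma L_ex: "set ws \<subseteq> X \<Longrightarrow> \<exists>vs. set vs \<subseteq> X \<and> length vs = L X ws \<and> eqV vs ws"
  unfolding L_def by (rule LeastI[of _ "length ws"]) (auto intro!: exI[of _ ws])

lemma L_cong: assumes "eqV ws ws'" shows "L X ws = L X ws'"
proof -
  have "\<And>vs. eqV vs ws = eqV vs ws'" using assms eqV_trans eqV_sym by blast
  then show ?thesis unfolding L_def by simp
qed

lemma eqV_app:
  assumes "set us \<subseteq> R" "set us' \<subseteq> R" "eqV ws ws'" "eqV us us'"
  shows "eqV (ws @ us) (ws' @ us')"
  using assms ev_V unfolding eqV_def by auto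

lemma L_app:
  assumes X: "X \<subseteq> R" and ws: "set ws \<subseteq> X" and us: "set us \<subseteq> X"
  shows "L X (ws @ us) \<le> L X ws + L X us"
proof -
  obtain vs where vs: "set vs \<subseteq> X" "length vs = L X ws" "eqV vs ws" using L_ex[OF ws] by blast
  obtain vs' where vs': "set vs' \<subseteq> X" "length vs' = L X us" "eqV vs' us" using L_ex[OF us] by blast
  have "eqV (vs @ vs') (ws @ us)" using eqV_app vs vs' X us by blast
  then have "L X (ws @ us) \<le> length (vs @ vs')" using vs vs' by (intro L_le) auto
  then show ?thesis using vs vs' by simp
qed

lemma L_mono: assumes "X \<subseteq> Y" "set ws \<subseteq> X" shows "L Y ws \<le> L X ws"
proof -
  obtain vs where "set vs \<subseteq> X" "length vs = L X ws" "eqV vs ws" using L_ex[OF assms(2)] by blast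
  then show ?thesis using L_le[of vs Y ws] assms(1) by auto
qed

lemma L_Nil[simp]: "L X [] = 0"
  using L_le[of "[]" X "[]"] by simp

lemma L_len: "set ws \<subseteq> X \<Longrightarrow> L X ws \<le> length ws"
  using L_le by auto

lemma eqV_cancel: "c \<in> R \<Longrightarrow> eqV (ws @ c # c # us) (ws @ us)"
  unfolding eqV_def by simp

lemma L_zero: assumes "set ws \<subseteq> X" "L X ws = 0" shows "eqV ws []"
proof -
  obtain vs where "set vs \<subseteq> X" "length vs = L X ws" "eqV vs ws" using L_ex[OF assms(1)] by blast
  then have "vs = []" "eqV vs ws" using assms(2) by auto
  then show ?thesis using eqV_sym by blast
qed

lemma L_single: assumes c: "c \<in> X" and X: "X \<subseteq> R" shows "L X [c] = 1"
proof -
  have cR: "c \<in> R" using c X by blast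
  have le1: "L X [c] \<le> 1" using L_len[of "[c]" X] c by simp
  have "L X [c] \<noteq> 0"
  proof
    assume "L X [c] = 0"
    then have e: "eqV [c] []" using L_zero[of "[c]" X] c by simp
    have "ev [c] c = ev [] c" using e aV[OF cR] unfolding eqV_def by blast
    then have "sg c c = c" by simp
    then have "- c = c" using sg_self[OF cR] by simp
    then have "c + c = 0" by (metis add.left_inverse)
    then have "(2::real) *\<^sub>R c = 0" by (simp add: scaleR_2)
    then have "c = 0" by simp
    then show False using cR zR by blast
  qed
  then show ?thesis using le1 by linarith
qed

lemma red_noadj:
  assumes X: "X \<subseteq> R" and ws: "set ws \<subseteq> X" "length ws = L X ws"
  shows "noadj ws"
  unfolding noadj_def
proof (intro allI impI)
  fix i assume i: "Suc i < length ws"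
  show "ws ! i \<noteq> ws ! Suc i"
  proof
    assume e: "ws ! i = ws ! Suc i"
    define c where "c = ws ! i"
    have ii: "i < length ws" using i by simp
    have cR: "c \<in> R" using ws X nth_mem[OF ii] c_def by auto
    have d1: "drop i ws = ws ! i # drop (Suc i) ws" using Cons_nth_drop_Suc[OF ii] by simp
    have d2: "drop (Suc i) ws = ws ! Suc i # drop (Suc (Suc i)) ws" using Cons_nth_drop_Suc[OF i] by simp
    have dec: "ws = take i ws @ c # c # drop (Suc (Suc i)) ws"
      using append_take_drop_id[of i ws] d1 d2 e c_def by simp
    have "eqV ws (take i ws @ drop (Suc (Suc i)) ws)"
      using eqV_cancel[OF cR, of "take i ws" "drop (Suc (Suc i)) ws"] dec by metis
    moreover have "set (take i ws @ drop (Suc (Suc i)) ws) \<subseteq> X"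
      using ws(1) set_take_subset[of i ws] set_drop_subset[of "Suc (Suc i)" ws] by auto
    ultimately have "L X ws \<le> length (take i ws @ drop (Suc (Suc i)) ws)"
      using L_le eqV_sym by blast
    then show False using ws i by simp
  qed
qed

end

context rs0 begin
lemma ev_coef:
  assumes a: "a \<in> R" and b: "b \<in> R"
  shows "set ws \<subseteq> {a, b} \<Longrightarrow> coef (cr a b) (cr b a) (map (\<lambda>c. c = a) ws) = (p1, p2, q1, q2) \<Longrightarrow>
     ev ws z = z + (p1 * cr a z + p2 * cr b z) *\<^sub>R a + (q1 * cr a z + q2 * cr b z) *\<^sub>R b"
proof (induction ws arbitrary: p1 p2 q1 q2)
  case Nil then show ?case by simp
next
  case (Cons c cs)
  obtain r1 r2 s1 s2 where cf: "coef (cr a b) (cr b a) (map (\<lambda>c. c = a) cs) = (r1, r2, s1, s2)"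
    by (metis prod_cases4)
  have ih: "ev cs z = z + (r1 * cr a z + r2 * cr b z) *\<^sub>R a + (s1 * cr a z + s2 * cr b z) *\<^sub>R b"
    using Cons cf by auto
  define T where "T = ev cs z"
  have la: "linear (cr a)" and lb: "linear (cr b)" using cr_lin a b by auto
  have cra: "cr a T = cr a z + (r1 * cr a z + r2 * cr b z) * 2 + (s1 * cr a z + s2 * cr b z) * cr a b"
    unfolding T_def ih using linear_add[OF la] linear_scale[OF la] cr_2[OF a] by simp
  have crb: "cr b T = cr b z + (r1 * cr a z + r2 * cr b z) * cr b a + (s1 * cr a z + s2 * cr b z) * 2"
    unfolding T_def ih using linear_add[OF lb] linear_scale[OF lb] cr_2[OF b] by simp
  show ?case
  proof (cases "c = a")
    case True
    then have e: "p1 = - r1 - 1 - cr a b * s1" "p2 = - r2 - cr a b * s2" "q1 = s1" "q2 = s2"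
      using Cons.prems(2) cf by auto
    have v: "ev (c # cs) z = z + ((r1 * cr a z + r2 * cr b z) - cr a T) *\<^sub>R a + (s1 * cr a z + s2 * cr b z) *\<^sub>R b"
      using True unfolding ih[folded T_def] by (simp add: sg_def T_def[symmetric] ih[folded T_def] algebra_simps)
    have "(r1 * cr a z + r2 * cr b z) - cr a T = p1 * cr a z + p2 * cr b z"
      unfolding cra e by (simp add: algebra_simps)
    then show ?thesis using v e by simp
  next
    case False
    then have cb: "c = b" using Cons.prems(1) by auto
    have e: "p1 = r1" "p2 = r2" "q1 = - s1 - cr b a * r1" "q2 = - s2 - 1 - cr b a * r2"
      using Cons.prems(2) cf False by auto
    have v: "ev (c # cs) z = z + (r1 * cr a z + r2 * cr b z) *\<^sub>R a + ((s1 * cr a z + s2 * cr b z) - cr b T) *\<^sub>R b"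
      using cb unfolding ih[folded T_def] by (simp add: sg_def T_def[symmetric] ih[folded T_def] algebra_simps)
    have "(s1 * cr a z + s2 * cr b z) - cr b T = q1 * cr a z + q2 * cr b z"
      unfolding crb e by (simp add: algebra_simps)
    then show ?thesis using v e by simp
  qed
qed

end

context rs0 begin

lemma alt_ev_braid:
  assumes a: "a \<in> R" and b: "b \<in> R" and ab: "a \<noteq> b" and ok: "okpair (cr a b) (cr b a)"
  shows "eqV (alt (mm (cr a b) (cr b a)) b a) (alt (mm (cr a b) (cr b a)) a b)"
proof -
  let ?m = "mm (cr a b) (cr b a)"
  have m1: "map (\<lambda>c. c = a) (alt ?m b a) = alt ?m False True" using alt_map[of "\<lambda>c. c = a"] ab by simp
  have m2: "map (\<lambda>c. c = a) (alt ?m a b) = alt ?m True False" using alt_map[of "\<lambda>c. c = a"] ab by simp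
  obtain p1 p2 q1 q2 where cf: "coef (cr a b) (cr b a) (alt ?m False True) = (p1, p2, q1, q2)"
    by (metis prod_cases4)
  have cf2: "coef (cr a b) (cr b a) (alt ?m True False) = (p1, p2, q1, q2)"
    using cf braid_coef[OF ok] by simp
  have s1: "set (alt ?m b a) \<subseteq> {a, b}" and s2: "set (alt ?m a b) \<subseteq> {a, b}" using alt_set by fastforce+
  show ?thesis unfolding eqV_def
    using ev_coef[OF a b s1, of p1 p2 q1 q2] ev_coef[OF a b s2, of p1 p2 q1 q2] m1 m2 cf cf2 by simp
qed

lemma DL:
  assumes a: "a \<in> R" and b: "b \<in> R" and ab: "a \<noteq> b" and ok: "okpair (cr a b) (cr b a)"
    and us: "set us \<subseteq> {a, b}" and ge: "L {a, b} (us @ [a]) \<ge> L {a, b} us"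
  shows "\<exists>x y. x \<ge> 0 \<and> y \<ge> 0 \<and> ev us a = x *\<^sub>R a + y *\<^sub>R b"
proof -
  define X where "X = {a, b}"
  have XR: "X \<subseteq> R" using a b X_def by auto
  have usX: "set us \<subseteq> X" using us X_def by auto
  obtain rs where rs: "set rs \<subseteq> X" "length rs = L X us" "eqV rs us" using L_ex[OF usX] by blast
  define k where "k = length rs"
  have Lrs: "L X rs = k" using L_cong[OF rs(3)] rs(2) k_def by simp
  have na: "noadj rs" using red_noadj[OF XR rs(1)] Lrs k_def by simp
  have aR: "set [a] \<subseteq> R" using a by simp
  have e1: "eqV (rs @ [a]) (us @ [a])" using eqV_app[OF aR aR rs(3) eqV_refl] .
  have ge': "L X (rs @ [a]) \<ge> k" using L_cong[OF e1] ge Lrs L_cong[OF rs(3)] X_def by simp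
  have evr: "ev us a = ev rs a" using rs(3) aV[OF a] unfolding eqV_def by simp
  show ?thesis
  proof (cases "rs = []")
    case True
    then show ?thesis using evr by (intro exI[of _ 1] exI[of _ 0]) simp
  next
    case False
    have la: "last rs \<noteq> a"
    proof
      assume l: "last rs = a"
      have d: "rs @ [a] = butlast rs @ a # a # []" using l False by (metis append.assoc append_Cons append_butlast_last_id append_Nil)
      have "eqV (rs @ [a]) (butlast rs)" unfolding d by (rule eqV_cancel[OF a, of "butlast rs" "[]", unfolded append_Nil2])
      moreover have "set (butlast rs) \<subseteq> X" using rs(1) by (meson in_set_butlastD subset_iff)
      ultimately have "L X (rs @ [a]) \<le> length (butlast rs)" using L_le eqV_sym by blast
      moreover have "length (butlast rs) < k" using False k_def by (simp add: length_greater_0_conv)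
      ultimately show False using ge' by linarith
    qed
    have lb: "last rs = b" using la last_in_set[OF False] rs(1) X_def by auto
    have rsalt: "rs = alt k b a" using alt_noadj[rule_format, of b a rs] ab rs(1) X_def na False lb k_def
      by (auto simp: insert_commute)
    define m where "m = mm (cr a b) (cr b a)"
    have km: "k < m"
    proof (rule ccontr)
      assume "\<not> k < m"
      then have kk: "k = (k - m) + m" by simp
      define pre where "pre = alt (k - m) (if even m then b else a) (if even m then a else b)"
      have rsd: "rs = pre @ alt m b a" unfolding rsalt pre_def by (subst kk) (rule alt_split)
      have m0: "m > 0" unfolding m_def by (rule mm_pos)
      then obtain m' where m': "m = Suc m'" using gr0_implies_Suc by blast
      have preX: "set pre \<subseteq> X" unfolding pre_def X_def using alt_set by fastforce
      have altR: "set (alt m b a) \<subseteq> R" "set (alt m a b) \<subseteq> R" using alt_set[of m b a] alt_set[of m a b] a b by auto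
      have br: "eqV (alt m b a) (alt m a b)" unfolding m_def by (rule alt_ev_braid[OF a b ab ok])
      have e2: "eqV (alt m b a @ [a]) (alt m a b @ [a])" by (rule eqV_app[OF aR aR br eqV_refl])
      have s3: "set (alt m b a @ [a]) \<subseteq> R" "set (alt m a b @ [a]) \<subseteq> R" using altR a by auto
      have "eqV (rs @ [a]) (pre @ alt m a b @ [a])"
        unfolding rsd using eqV_app[OF s3 eqV_refl e2] by simp
      also have "pre @ alt m a b @ [a] = (pre @ alt m' b a) @ a # a # []" unfolding m' by simp
      finally have "eqV (rs @ [a]) (pre @ alt m' b a)"
        using eqV_cancel[OF a, of "pre @ alt m' b a" "[]"] eqV_trans by simp
      moreover have "set (pre @ alt m' b a) \<subseteq> X" using preX alt_set[of m' b a] X_def by auto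
      ultimately have "L X (rs @ [a]) \<le> length (pre @ alt m' b a)" using L_le eqV_sym by blast
      also have "\<dots> = k - 1" using kk m' unfolding pre_def by simp
      finally show False using ge' m0 kk by linarith
    qed
    obtain p1 p2 q1 q2 where cf: "coef (cr a b) (cr b a) (alt k False True) = (p1, p2, q1, q2)"
      by (metis prod_cases4)
    have mp: "map (\<lambda>c. c = a) rs = alt k False True" unfolding rsalt using alt_map[of "\<lambda>c. c = a"] ab by simp
    have "ev rs a = a + (p1 * cr a a + p2 * cr b a) *\<^sub>R a + (q1 * cr a a + q2 * cr b a) *\<^sub>R b"
      using ev_coef[OF a b, of rs p1 p2 q1 q2] rs(1) X_def mp cf by simp
    also have "\<dots> = (1 + 2 * p1 + cr b a * p2) *\<^sub>R a + (2 * q1 + cr b a * q2) *\<^sub>R b"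
      using cr_2[OF a] by (simp add: algebra_simps)
    finally have ev: "ev us a = (1 + 2 * p1 + cr b a * p2) *\<^sub>R a + (2 * q1 + cr b a * q2) *\<^sub>R b"
      using evr by simp
    have "1 + 2 * p1 + cr b a * p2 \<ge> 0 \<and> 2 * q1 + cr b a * q2 \<ge> 0"
      using cone_coef[OF ok km[unfolded m_def]] cf by simp
    then show ?thesis using ev by blast
  qed
qed

end

locale KLs = rs0 +
  fixes D assumes DR: "D \<subseteq> R" and finD: "finite D"
    and okD: "\<And>a b. a \<in> D \<Longrightarrow> b \<in> D \<Longrightarrow> a \<noteq> b \<Longrightarrow> okpair (cr a b) (cr b a)"
begin

definition cn where "cn = {x. \<exists>c. (\<forall>d\<in>D. 0 \<le> c d) \<and> x = (\<Sum>d\<in>D. c d *\<^sub>R d)}"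

lemma cn_D: assumes d: "d \<in> D" shows "d \<in> cn"
proof -
  have "(\<Sum>e\<in>D. (if e = d then 1 else 0::real) *\<^sub>R e) = (\<Sum>e\<in>D. if e = d then e else 0)"
    by (rule sum.cong) auto
  also have "\<dots> = d" using d finD by (simp add: sum.delta')
  finally show ?thesis unfolding cn_def
    by (intro CollectI exI[of _ "\<lambda>e. if e = d then 1 else 0::real"]) auto
qed

lemma cn_add: "x \<in> cn \<Longrightarrow> y \<in> cn \<Longrightarrow> x + y \<in> cn"
  unfolding cn_def
proof safe
  fix c c' :: "'a \<Rightarrow> real" assume "\<forall>d\<in>D. 0 \<le> c d" "\<forall>d\<in>D. 0 \<le> c' d"
  then show "\<exists>c''. (\<forall>d\<in>D. 0 \<le> c'' d) \<and> (\<Sum>d\<in>D. c d *\<^sub>R d) + (\<Sum>d\<in>D. c' d *\<^sub>R d) = (\<Sum>d\<in>D. c'' d *\<^sub>R d)"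
    by (intro exI[of _ "\<lambda>d. c d + c' d"]) (simp add: scaleR_add_left sum.distrib)
qed

lemma cn_scale: "x \<in> cn \<Longrightarrow> t \<ge> 0 \<Longrightarrow> t *\<^sub>R x \<in> cn"
  unfolding cn_def
proof safe
  fix c :: "'a \<Rightarrow> real" assume "\<forall>d\<in>D. 0 \<le> c d" "t \<ge> 0"
  then show "\<exists>c''. (\<forall>d\<in>D. 0 \<le> c'' d) \<and> t *\<^sub>R (\<Sum>d\<in>D. c d *\<^sub>R d) = (\<Sum>d\<in>D. c'' d *\<^sub>R d)"
    by (intro exI[of _ "\<lambda>d. t * c d"]) (simp add: scaleR_sum_right)
qed

lemma wsDR: "set ws \<subseteq> D \<Longrightarrow> set ws \<subseteq> R" using DR by auto

lemma KL_n: "\<forall>ws \<delta>. set ws \<subseteq> D \<longrightarrow> \<delta> \<in> D \<longrightarrow> L D ws = n \<longrightarrow> L D (ws @ [\<delta>]) \<ge> n \<longrightarrow> ev ws \<delta> \<in> cn"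
proof (induction n rule: less_induct)
  case (less n)
  show ?case
  proof (intro allI impI)
    fix ws \<delta> assume ws: "set ws \<subseteq> D" and d: "\<delta> \<in> D" and Ln: "L D ws = n" and ge: "L D (ws @ [\<delta>]) \<ge> n"
    have dR: "\<delta> \<in> R" using d DR by auto
    show "ev ws \<delta> \<in> cn"
    proof (cases "n = 0")
      case True
      then have "eqV ws []" using L_zero ws Ln by blast
      then have "ev ws \<delta> = \<delta>" using aV[OF dR] unfolding eqV_def by simp
      then show ?thesis using cn_D d by simp
    next
      case False
      obtain rs where rs: "set rs \<subseteq> D" "length rs = n" "eqV rs ws" using L_ex[OF ws] Ln by blast
      then have "rs \<noteq> []" using False by auto
      then obtain rs' \<delta>' where rsd: "rs = rs' @ [\<delta>']" by (metis rev_exhaust)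
      have d': "\<delta>' \<in> D" and rs'D: "set rs' \<subseteq> D" using rs(1) rsd by auto
      have d'R: "\<delta>' \<in> R" using d' DR by auto
      have Lrs: "L D rs = n" using L_cong[OF rs(3)] Ln by simp
      have Lrs': "L D rs' = n - 1"
      proof -
        have "L D rs' \<le> n - 1" using L_len[OF rs'D] rs(2) rsd by simp
        moreover have "n \<le> L D rs' + 1"
          using Lrs L_app[OF DR rs'D, of "[\<delta>']"] L_single[OF d' DR] d' rsd by simp
        ultimately show ?thesis by simp
      qed
      have dd: "\<delta>' \<noteq> \<delta>"
      proof
        assume e: "\<delta>' = \<delta>"
        have "eqV (ws @ [\<delta>]) (rs @ [\<delta>])" using eqV_app[OF _ _ eqV_sym[OF rs(3)] eqV_refl] dR by simp
        also have "rs @ [\<delta>] = rs' @ \<delta> # \<delta> # []" using rsd e by simp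
        finally have "eqV (ws @ [\<delta>]) rs'" using eqV_trans eqV_cancel[OF dR, of rs' "[]"] by simp
        then have "L D (ws @ [\<delta>]) = n - 1" using L_cong Lrs' by simp
        then show False using ge False by simp
      qed
      define I where "I = {\<delta>, \<delta>'}"
      have ID: "I \<subseteq> D" using d d' I_def by auto
      have IR: "I \<subseteq> R" using ID DR by auto
      have Fb: "n \<le> L D vs + L I us" if vs: "set vs \<subseteq> D" and us: "set us \<subseteq> I" and e: "eqV (vs @ us) ws" for vs us
      proof -
        have "n = L D (vs @ us)" using L_cong[OF e] Ln by simp
        also have "\<dots> \<le> L D vs + L D us" using L_app[OF DR vs] us ID by auto
        also have "L D us \<le> L I us" using L_mono[OF ID us] .
        finally show ?thesis by simp
      qed
      define A where "A = {vs. set vs \<subseteq> D \<and> (\<exists>us. set us \<subseteq> I \<and> eqV (vs @ us) ws \<and> L D vs + L I us = n)}"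
      have rs'A: "rs' \<in> A"
      proof -
        have "L I [\<delta>'] = 1" using L_single[of \<delta>' I] I_def IR by simp
        moreover have "eqV (rs' @ [\<delta>']) ws" using rs(3) rsd by simp
        ultimately show ?thesis unfolding A_def using rs'D Lrs' False I_def
          by (intro CollectI conjI exI[of _ "[\<delta>']"]) auto
      qed
      obtain vs where vsA: "vs \<in> A" and vmin: "\<And>vs'. vs' \<in> A \<Longrightarrow> L D vs \<le> L D vs'"
        using ex_has_least_nat[of "\<lambda>vs. vs \<in> A" rs' "L D"] rs'A by blast
      obtain us where vsD: "set vs \<subseteq> D" and us: "set us \<subseteq> I" "eqV (vs @ us) ws" "L D vs + L I us = n"
        using vsA unfolding A_def by blast
      have Lvs: "L D vs < n" using vmin[OF rs'A] Lrs' False by simp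
      have c1: "L D (vs @ [e]) \<ge> L D vs" if eI: "e \<in> I" for e
      proof (rule ccontr)
        assume lt: "\<not> L D (vs @ [e]) \<ge> L D vs"
        have eD: "e \<in> D" and eR: "e \<in> R" using eI ID IR by auto
        have s1: "set (vs @ [e]) \<subseteq> D" using vsD eD by simp
        have s2: "set (e # us) \<subseteq> I" using us(1) eI by simp
        have "eqV ((vs @ [e]) @ (e # us)) (vs @ us)" using eqV_cancel[OF eR, of vs us] by simp
        then have e3: "eqV ((vs @ [e]) @ (e # us)) ws" using us(2) eqV_trans by blast
        have "L I (e # us) \<le> L I [e] + L I us" using L_app[OF IR, of "[e]" us] eI us(1) by simp
        also have "L I [e] = 1" using L_single[OF eI IR] .
        finally have "L D (vs @ [e]) + L I (e # us) \<le> n" using lt us(3) by linarith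
        then have "L D (vs @ [e]) + L I (e # us) = n" using Fb[OF s1 s2 e3] by linarith
        then have "vs @ [e] \<in> A" unfolding A_def using s1 s2 e3 by blast
        then show False using vmin lt by fastforce
      qed
      have ih1: "ev vs \<delta> \<in> cn" using less.IH[OF Lvs] vsD d c1[of \<delta>] I_def by blast
      have ih2: "ev vs \<delta>' \<in> cn" using less.IH[OF Lvs] vsD d' c1[of \<delta>'] I_def by blast
      have c2: "L I (us @ [\<delta>]) \<ge> L I us"
      proof (rule ccontr)
        assume lt: "\<not> L I (us @ [\<delta>]) \<ge> L I us"
        have usR: "set us \<subseteq> R" using us(1) IR by auto
        have "eqV (ws @ [\<delta>]) ((vs @ us) @ [\<delta>])" using eqV_app[OF _ _ eqV_sym[OF us(2)] eqV_refl] dR by simp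
        then have "L D (ws @ [\<delta>]) = L D (vs @ (us @ [\<delta>]))" using L_cong by simp
        also have "\<dots> \<le> L D vs + L D (us @ [\<delta>])" using L_app[OF DR vsD] us(1) ID d by auto
        also have "L D (us @ [\<delta>]) \<le> L I (us @ [\<delta>])" using L_mono[OF ID] us(1) I_def by auto
        finally show False using lt us(3) ge by linarith
      qed
      obtain x y where xy: "x \<ge> 0" "y \<ge> 0" "ev us \<delta> = x *\<^sub>R \<delta> + y *\<^sub>R \<delta>'"
        using DL[OF dR d'R dd[symmetric] okD[OF d d' dd[symmetric]]] us(1) c2 I_def by blast
      have "ev ws \<delta> = ev (vs @ us) \<delta>" using us(2) aV[OF dR] unfolding eqV_def by simp
      also have "\<dots> = ev vs (x *\<^sub>R \<delta> + y *\<^sub>R \<delta>')" using xy(3) by simp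
      also have "\<dots> = x *\<^sub>R ev vs \<delta> + y *\<^sub>R ev vs \<delta>'"
        using ev_lin[OF wsDR[OF vsD]] by (simp add: linear_add linear_scale)
      finally show ?thesis using cn_add cn_scale ih1 ih2 xy by simp
    qed
  qed
qed

lemma KL: "set ws \<subseteq> D \<Longrightarrow> \<delta> \<in> D \<Longrightarrow> L D (ws @ [\<delta>]) \<ge> L D ws \<Longrightarrow> ev ws \<delta> \<in> cn"
  using KL_n by blast

lemma orbit_cone: assumes ws: "set ws \<subseteq> D" and d: "\<delta> \<in> D"
  shows "ev ws \<delta> \<in> cn \<or> - ev ws \<delta> \<in> cn"
proof (cases "L D (ws @ [\<delta>]) \<ge> L D ws")
  case True then show ?thesis using KL ws d by blast
next
  case False
  have dR: "\<delta> \<in> R" using d DR by auto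
  have s: "set (ws @ [\<delta>]) \<subseteq> D" using ws d by simp
  have "eqV ((ws @ [\<delta>]) @ [\<delta>]) ws" using eqV_cancel[OF dR, of ws "[]"] by simp
  then have "L D ((ws @ [\<delta>]) @ [\<delta>]) \<ge> L D (ws @ [\<delta>])" using L_cong False by simp
  then have "ev (ws @ [\<delta>]) \<delta> \<in> cn" using KL[OF s d] by blast
  then show ?thesis using dR ev_neg[OF wsDR[OF ws]] by simp
qed

end

lemma int_okpair:
  fixes i j :: int
  assumes "i \<le> 0" "j \<le> 0" "i * j \<le> 3" "i = 0 \<longleftrightarrow> j = 0"
  shows "(i, j) \<in> {(0, 0), (-1, -1), (-1, -2), (-2, -1), (-1, -3), (-3, -1)}"
proof (cases "i = 0")
  case True then show ?thesis using assms by auto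
next
  case False
  then have i1: "i \<le> -1" and j1: "j \<le> -1" using assms by auto
  have "i * (j + 1) \<ge> 0" using i1 j1 by (intro mult_nonpos_nonpos) auto
  then have "i * j \<ge> - i" by (simp add: algebra_simps)
  then have i3: "i \<ge> -3" using assms by linarith
  have "(i + 1) * j \<ge> 0" using i1 j1 by (intro mult_nonpos_nonpos) auto
  then have "i * j \<ge> - j" by (simp add: algebra_simps)
  then have j3: "j \<ge> -3" using assms by linarith
  have "i = -3 \<or> i = -2 \<or> i = -1" using i1 i3 by linarith
  moreover have "j = -3 \<or> j = -2 \<or> j = -1" using j1 j3 by linarith
  ultimately show ?thesis using assms(3) by auto
qed

context rs0 begin

lemma word_subst:
  assumes X: "X \<subseteq> R" and per: "\<forall>c\<in>set ws. \<exists>us. set us \<subseteq> X \<and> (\<forall>x\<in>V. sg c x = ev us x)"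
  shows "\<exists>vs. set vs \<subseteq> X \<and> eqV ws vs"
  using per
proof (induction ws)
  case Nil then show ?case by (auto intro!: exI[of _ "[]"])
next
  case (Cons c cs)
  obtain vs where vs: "set vs \<subseteq> X" "eqV cs vs" using Cons by auto
  obtain us where us: "set us \<subseteq> X" "\<forall>x\<in>V. sg c x = ev us x" using Cons.prems by auto
  have "eqV (c # cs) (us @ vs)"
    unfolding eqV_def
  proof
    fix x assume x: "x \<in> V"
    have "ev vs x \<in> V" using ev_V vs X x by auto
    then show "ev (c # cs) x = ev (us @ vs) x" using vs(2) us(2) x unfolding eqV_def by simp
  qed
  then show ?case using vs us by (intro exI[of _ "us @ vs"]) auto
qed

end

context rsO begin

definition Orb where "Orb D = {ev ws d | ws d. set ws \<subseteq> D \<and> d \<in> D}"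

definition Inv where "Inv D \<longleftrightarrow> D \<subseteq> Rp \<and> (\<forall>d\<in>D. h d > 0) \<and>
   (\<forall>b\<in>B. \<exists>us. set us \<subseteq> D \<and> (\<forall>x\<in>V. sg b x = ev us x)) \<and> B \<subseteq> Orb D"

lemma Inv_B: "Inv B"
proof -
  have "\<forall>b\<in>B. \<exists>us. set us \<subseteq> B \<and> (\<forall>x\<in>V. sg b x = ev us x)"
  proof
    fix b assume "b \<in> B" then show "\<exists>us. set us \<subseteq> B \<and> (\<forall>x\<in>V. sg b x = ev us x)"
      by (intro exI[of _ "[b]"]) simp
  qed
  moreover have "B \<subseteq> Orb B"
  proof
    fix b assume "b \<in> B" then show "b \<in> Orb B" unfolding Orb_def
      by (intro CollectI exI[of _ "[]"] exI[of _ b]) simp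
  qed
  ultimately show ?thesis unfolding Inv_def using B_Rp B_hpos by blast
qed

lemma Rp_Orb: assumes I: "Inv D" shows "Rp \<subseteq> Orb D"
proof
  fix \<gamma> assume "\<gamma> \<in> Rp"
  then obtain ws b where w: "set ws \<subseteq> B" "b \<in> B" "\<gamma> = ev ws b" unfolding Rp_def by auto
  have DR: "D \<subseteq> R" using I Rp_R unfolding Inv_def by auto
  obtain vs where vs: "set vs \<subseteq> D" "eqV ws vs" using word_subst[OF DR, of ws] I w(1) unfolding Inv_def by blast
  obtain us d where ud: "set us \<subseteq> D" "d \<in> D" "b = ev us d" using I w(2) unfolding Inv_def Orb_def by blast
  have "\<gamma> = ev vs b" using vs(2) w aV BR unfolding eqV_def by auto
  then have "\<gamma> = ev (vs @ us) d" using ud by simp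
  then show "\<gamma> \<in> Orb D" unfolding Orb_def using vs ud by (intro CollectI exI[of _ "vs @ us"] exI[of _ d]) auto
qed

end

context rsO begin
lemma ip_sum_left: "finite F \<Longrightarrow> (\<And>d. d \<in> F \<Longrightarrow> f d \<in> V) \<Longrightarrow> ip (sum f F) z = (\<Sum>d\<in>F. ip (f d) z)"
proof (induction F rule: finite_induct)
  case empty
  have "ip 0 z = ip (0 *\<^sub>R 0) z" by simp
  also have "\<dots> = 0" using ip_scale[OF zV, of 0 z] by simp
  finally show ?case by simp
next
  case (insert x F)
  have "sum f F \<in> V" using insert subV by (auto intro: subspace_sum)
  then show ?case using insert ip_add by simp
qed

lemma ip_sum_right: assumes "finite F" "\<And>d. d \<in> F \<Longrightarrow> f d \<in> V"
  shows "ip z (sum f F) = (\<Sum>d\<in>F. ip z (f d))"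
proof -
  have "ip z (sum f F) = ip (sum f F) z" by (rule ip_sym)
  also have "\<dots> = (\<Sum>d\<in>F. ip (f d) z)" by (rule ip_sum_left[OF assms])
  also have "\<dots> = (\<Sum>d\<in>F. ip z (f d))" by (rule sum.cong[OF refl]) (rule ip_sym)
  finally show ?thesis .
qed

lemma obtuse_indep:
  assumes DRp: "D \<subseteq> Rp" and fin: "finite D" and hp: "\<forall>d\<in>D. h d > 0"
    and obt: "\<forall>a\<in>D. \<forall>b\<in>D. a \<noteq> b \<longrightarrow> ip a b \<le> 0"
    and z: "(\<Sum>d\<in>D. c d *\<^sub>R d) = 0"
  shows "\<forall>d\<in>D. c d = 0"
proof -
  define P where "P = {d\<in>D. c d > 0}"
  define N where "N = {d\<in>D. c d < 0}"
  have DV: "\<And>d. d \<in> D \<Longrightarrow> d \<in> V" using DRp RpV by auto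
  have finP: "finite P" and finN: "finite N" using fin P_def N_def by auto
  have e1: "(\<Sum>d\<in>D. c d *\<^sub>R d) = (\<Sum>d\<in>P \<union> N. c d *\<^sub>R d)"
    by (rule sum.mono_neutral_right) (use fin in \<open>auto simp: P_def N_def\<close>)
  have e2: "(\<Sum>d\<in>P \<union> N. c d *\<^sub>R d) = (\<Sum>d\<in>P. c d *\<^sub>R d) + (\<Sum>d\<in>N. c d *\<^sub>R d)"
    by (rule sum.union_disjoint) (use finP finN in \<open>auto simp: P_def N_def\<close>)
  have "(\<Sum>d\<in>P. c d *\<^sub>R d) = - (\<Sum>d\<in>N. c d *\<^sub>R d)"
    using z e1 e2 by (simp add: eq_neg_iff_add_eq_0)
  also have "\<dots> = (\<Sum>d\<in>N. (- c d) *\<^sub>R d)" by (simp add: sum_negf)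
  finally have eq: "(\<Sum>d\<in>P. c d *\<^sub>R d) = (\<Sum>d\<in>N. (- c d) *\<^sub>R d)" .
  define x where "x = (\<Sum>d\<in>P. c d *\<^sub>R d)"
  have xV: "x \<in> V" unfolding x_def using DV P_def subV by (auto intro!: subspace_sum subspace_scale)
  have "ip x x = ip (\<Sum>d\<in>P. c d *\<^sub>R d) (\<Sum>e\<in>N. (- c e) *\<^sub>R e)" using eq x_def by simp
  also have "\<dots> = (\<Sum>d\<in>P. \<Sum>e\<in>N. c d * (- c e) * ip d e)"
  proof -
    have "ip (\<Sum>d\<in>P. c d *\<^sub>R d) (\<Sum>e\<in>N. (- c e) *\<^sub>R e) = (\<Sum>d\<in>P. ip (c d *\<^sub>R d) (\<Sum>e\<in>N. (- c e) *\<^sub>R e))"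
      by (rule ip_sum_left[OF finP]) (use DV P_def subV in \<open>auto intro: subspace_scale\<close>)
    also have "\<dots> = (\<Sum>d\<in>P. \<Sum>e\<in>N. c d * (- c e) * ip d e)"
    proof (rule sum.cong[OF refl])
      fix d assume d: "d \<in> P"
      have "ip (c d *\<^sub>R d) (\<Sum>e\<in>N. (- c e) *\<^sub>R e) = (\<Sum>e\<in>N. ip (c d *\<^sub>R d) ((- c e) *\<^sub>R e))"
        by (rule ip_sum_right[OF finN]) (use DV N_def subV in \<open>auto intro: subspace_scale subspace_neg\<close>)
      also have "\<dots> = (\<Sum>e\<in>N. c d * (- c e) * ip d e)"
      proof (rule sum.cong[OF refl])
        fix e assume e: "e \<in> N"
        have dV: "d \<in> V" and eV: "e \<in> V" using d e DV P_def N_def by auto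
        show "ip (c d *\<^sub>R d) ((- c e) *\<^sub>R e) = c d * (- c e) * ip d e"
          using ip_scale[OF dV, of "c d" "(- c e) *\<^sub>R e"] ip_scale2[OF eV, of d "- c e"] by simp
      qed
      finally show "ip (c d *\<^sub>R d) (\<Sum>e\<in>N. (- c e) *\<^sub>R e) = (\<Sum>e\<in>N. c d * (- c e) * ip d e)" .
    qed
    finally show ?thesis .
  qed
  also have "\<dots> \<le> 0"
  proof (rule sum_nonpos, rule sum_nonpos)
    fix d e assume d: "d \<in> P" and e: "e \<in> N"
    have "d \<noteq> e" using d e P_def N_def by auto
    then have "ip d e \<le> 0" using obt d e P_def N_def by auto
    moreover have "c d * (- c e) > 0" using d e P_def N_def by (auto simp: mult_pos_neg)
    ultimately show "c d * (- c e) * ip d e \<le> 0" by (metis less_eq_real_def mult_nonneg_nonpos)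
  qed
  finally have ipx: "ip x x \<le> 0" .
  have "x = 0"
  proof (rule ccontr)
    assume "x \<noteq> 0" then have "ip x x > 0" using ip_pos[OF xV] by blast
    then show False using ipx by linarith
  qed
  then have hx: "h (\<Sum>d\<in>P. c d *\<^sub>R d) = 0" "h (\<Sum>d\<in>N. (- c d) *\<^sub>R d) = 0" using eq x_def by (auto simp: h_def)
  have "P = {}"
  proof (rule ccontr)
    assume "P \<noteq> {}"
    then have "(\<Sum>d\<in>P. c d * h d) > 0" using finP P_def hp by (intro sum_pos) (auto)
    then show False using hx(1) by (simp add: h_sum h_scale)
  qed
  moreover have "N = {}"
  proof (rule ccontr)
    assume "N \<noteq> {}"
    then have "(\<Sum>d\<in>N. (- c d) * h d) > 0" using finN N_def hp by (intro sum_pos) (auto simp: mult_neg_pos)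
    then show False using hx(2) by (simp add: h_sum h_scale h_neg)
  qed
  ultimately show ?thesis
  proof (intro ballI)
    fix d assume d: "d \<in> D"
    show "c d = 0"
    proof (rule ccontr)
      assume "c d \<noteq> 0"
      then have "d \<in> P \<or> d \<in> N" using d unfolding P_def N_def by auto
      then show False using \<open>P = {}\<close> \<open>N = {}\<close> by blast
    qed
  qed
qed

end

lemma int_one: fixes i j :: int assumes "i \<ge> 1" "j \<ge> 1" "i * j \<le> 3" shows "i = 1 \<or> j = 1"
proof (rule ccontr)
  assume "\<not> (i = 1 \<or> j = 1)"
  then have "i \<ge> 2" "j \<ge> 2" using assms by auto
  then have "i * j \<ge> 2 * 2" by (intro mult_mono) auto
  then show False using assms by simp
qed

locale TermL = rsO +
  fixes D assumes I: "Inv D" and obt: "\<And>a b. a \<in> D \<Longrightarrow> b \<in> D \<Longrightarrow> a \<noteq> b \<Longrightarrow> ip a b \<le> 0"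
begin

lemma DRp: "D \<subseteq> Rp" using I unfolding Inv_def by blast
lemma hp: "d \<in> D \<Longrightarrow> h d > 0" using I unfolding Inv_def by blast
lemma DR: "D \<subseteq> R" using DRp Rp_R by blast
lemma finD: "finite D" using DRp finite_Rp finite_subset by blast

lemma okD: assumes a: "a \<in> D" and b: "b \<in> D" and ab: "a \<noteq> b" shows "okpair (cr a b) (cr b a)"
proof -
  have aR: "a \<in> Rp" and bR: "b \<in> Rp" using a b DRp by auto
  have np: "\<forall>t. a \<noteq> t *\<^sub>R b" using nonprop[of a b] a b DR hp ab by blast
  obtain i where i: "cr a b = of_int i" using cr_Int[OF aR bR] Ints_cases by blast
  obtain j where j: "cr b a = of_int j" using cr_Int[OF bR aR] Ints_cases by blast
  have "ip a b \<le> 0" "ip b a \<le> 0" using obt a b ab by auto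
  then have "\<not> cr a b > 0" "\<not> cr b a > 0" using cr_sign(1)[OF aR bR] cr_sign(1)[OF bR aR] by auto
  then have i0: "i \<le> 0" and j0: "j \<le> 0" using i j by auto
  have "cr a b = 0 \<longleftrightarrow> cr b a = 0" using cr_sign(3)[OF aR bR] cr_sign(3)[OF bR aR] ip_sym[of a b] by simp
  then have ij0: "i = 0 \<longleftrightarrow> j = 0" using i j by simp
  have "of_int (i * j) \<le> (3::real)" using pq_le3[OF aR bR np] i j by simp
  then have "i * j \<le> 3" by linarith
  then have "(i, j) \<in> {(0, 0), (-1, -1), (-1, -2), (-2, -1), (-1, -3), (-3, -1)}"
    using int_okpair i0 j0 ij0 by blast
  then have "(cr a b, cr b a) \<in> {(0, 0), (-1, -1), (-1, -2), (-2, -1), (-1, -3), (-3, -1)}"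
    unfolding i j by auto
  then show ?thesis unfolding okpair_def .
qed

sublocale K: KLs V R D by unfold_locales (use DR finD okD in auto)

lemma cone: assumes g: "\<gamma> \<in> Rp" shows "\<gamma> \<in> K.cn \<or> - \<gamma> \<in> K.cn"
proof -
  obtain ws d where "set ws \<subseteq> D" "d \<in> D" "\<gamma> = ev ws d" using Rp_Orb[OF I] g unfolding Orb_def by blast
  then show ?thesis using K.orbit_cone by blast
qed

lemma hcn: assumes x: "x \<in> K.cn" shows "h x \<ge> 0"
proof -
  obtain c where c: "\<forall>d\<in>D. 0 \<le> c d" "x = (\<Sum>d\<in>D. c d *\<^sub>R d)" using x unfolding K.cn_def by blast
  have "h x = (\<Sum>d\<in>D. c d * h d)" using c(2) by (simp add: h_sum h_scale)
  also have "\<dots> \<ge> 0"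
  proof (rule sum_nonneg)
    fix d assume d: "d \<in> D"
    then have "0 \<le> c d" "0 \<le> h d" using c(1) hp by (auto simp: less_imp_le)
    then show "0 \<le> c d * h d" by simp
  qed
  finally show ?thesis .
qed

end

context TermL begin

lemma uniq: assumes e: "(\<Sum>d\<in>D. c d *\<^sub>R d) = (\<Sum>d\<in>D. c' d *\<^sub>R d)" shows "\<forall>d\<in>D. c d = c' d"
proof -
  have "(\<Sum>d\<in>D. (c d - c' d) *\<^sub>R d) = 0" using e by (simp add: scaleR_diff_left sum_subtractf)
  then have "\<forall>d\<in>D. c d - c' d = 0" using obtuse_indep[OF DRp finD _ _, of "\<lambda>d. c d - c' d"] hp obt by blast
  then show ?thesis by simp
qed

lemma delta_sum: assumes d: "\<delta> \<in> D" shows "(\<Sum>e\<in>D. (if e = \<delta> then 1 else 0::real) *\<^sub>R e) = \<delta>"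
proof -
  have "(\<Sum>e\<in>D. (if e = \<delta> then 1 else 0::real) *\<^sub>R e) = (\<Sum>e\<in>D. if e = \<delta> then e else 0)"
    by (rule sum.cong) auto
  also have "\<dots> = \<delta>" using d finD by (simp add: sum.delta')
  finally show ?thesis .
qed

lemma cn_single: assumes x: "x \<in> K.cn" and y: "y \<in> K.cn" and xy: "x + y = \<delta>" and d: "\<delta> \<in> D"
  shows "\<exists>t. x = t *\<^sub>R \<delta>"
proof -
  obtain c where c: "\<forall>d\<in>D. 0 \<le> c d" "x = (\<Sum>d\<in>D. c d *\<^sub>R d)" using x unfolding K.cn_def by blast
  obtain c' where c': "\<forall>d\<in>D. 0 \<le> c' d" "y = (\<Sum>d\<in>D. c' d *\<^sub>R d)" using y unfolding K.cn_def by blast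
  have "(\<Sum>d\<in>D. (c d + c' d) *\<^sub>R d) = x + y" using c c' by (simp add: scaleR_add_left sum.distrib)
  also have "\<dots> = (\<Sum>e\<in>D. (if e = \<delta> then 1 else 0::real) *\<^sub>R e)" using xy delta_sum[OF d] by simp
  finally have cc: "\<forall>e\<in>D. c e + c' e = (if e = \<delta> then 1 else 0)"
    using uniq[of "\<lambda>d. c d + c' d" "\<lambda>e. if e = \<delta> then 1 else 0"] by blast
  have "x = (\<Sum>e\<in>D. if e = \<delta> then c e *\<^sub>R e else 0)"
    unfolding c(2)
  proof (rule sum.cong[OF refl])
    fix e assume e: "e \<in> D"
    show "c e *\<^sub>R e = (if e = \<delta> then c e *\<^sub>R e else 0)"
    proof (cases "e = \<delta>")
      case False
      then have "c e + c' e = 0" using cc e by auto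
      then have "c e = 0" using c(1) c'(1) e by (meson add_nonneg_eq_0_iff)
      then show ?thesis using False by simp
    qed simp
  qed
  also have "\<dots> = c \<delta> *\<^sub>R \<delta>" using d finD by (simp add: sum.delta')
  finally show ?thesis by blast
qed

lemma rootprop: assumes x: "x \<in> Rp" "h x > 0" and d: "\<delta> \<in> D" and xt: "x = t *\<^sub>R \<delta>" shows "x = \<delta>"
proof -
  have dR: "\<delta> \<in> R" using d DR by auto
  have xR: "t *\<^sub>R \<delta> \<in> R" using x(1) xt Rp_R by auto
  have "t = 1 \<or> t = -1" using red_prop[OF dR xR] .
  moreover have "t \<noteq> -1"
  proof
    assume "t = -1"
    then have "h x = - h \<delta>" using xt h_scale[of "-1" \<delta>] by simp
    then show False using x(2) hp[OF d] by simp
  qed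
  ultimately show ?thesis using xt by auto
qed

lemma pos_cn: assumes g: "\<gamma> \<in> Rp" "h \<gamma> > 0" shows "\<gamma> \<in> K.cn"
proof (rule ccontr)
  assume "\<gamma> \<notin> K.cn"
  then have "- \<gamma> \<in> K.cn" using cone g by blast
  then have "h (- \<gamma>) \<ge> 0" by (rule hcn)
  then show False using g h_neg[of \<gamma>] by simp
qed

end

context TermL begin

lemma D_sub_base: "D \<subseteq> base le Rp"
proof
  fix \<delta> assume d: "\<delta> \<in> D"
  have dRp: "\<delta> \<in> Rp" using d DRp by auto
  have nd: "\<not> (\<exists>\<beta>\<in>pos_roots le Rp. \<exists>\<gamma>\<in>pos_roots le Rp. \<delta> = \<beta> + \<gamma>)"
  proof
    assume "\<exists>\<beta>\<in>pos_roots le Rp. \<exists>\<gamma>\<in>pos_roots le Rp. \<delta> = \<beta> + \<gamma>"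
    then obtain \<beta> \<gamma> where b: "\<beta> \<in> Rp" "h \<beta> > 0" and g: "\<gamma> \<in> Rp" "h \<gamma> > 0" and e: "\<delta> = \<beta> + \<gamma>"
      unfolding pos_Rp by blast
    have bc: "\<beta> \<in> K.cn" and gc: "\<gamma> \<in> K.cn" using pos_cn b g by auto
    obtain t where "\<beta> = t *\<^sub>R \<delta>" using cn_single[OF bc gc e[symmetric] d] by blast
    then have bd: "\<beta> = \<delta>" using rootprop b d by blast
    have e2: "\<gamma> + \<beta> = \<delta>" using e by (simp add: add.commute)
    obtain t' where "\<gamma> = t' *\<^sub>R \<delta>" using cn_single[OF gc bc e2 d] by blast
    then have gd: "\<gamma> = \<delta>" using rootprop g d by blast
    have "\<delta> + \<delta> = \<delta>" using e bd gd by simp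
    then have "\<delta> = 0" by simp
    then show False using dRp Rp_ne0 by blast
  qed
  have "\<delta> \<in> pos_roots le Rp" unfolding pos_Rp using dRp hp[OF d] by blast
  then show "\<delta> \<in> base le Rp" unfolding base_def using nd by blast
qed

lemma base_sub_D: "base le Rp \<subseteq> D"
proof
  fix \<alpha> assume a: "\<alpha> \<in> base le Rp"
  then have ap: "\<alpha> \<in> pos_roots le Rp" and ind0: "\<not> (\<exists>\<beta>\<in>pos_roots le Rp. \<exists>\<gamma>\<in>pos_roots le Rp. \<alpha> = \<beta> + \<gamma>)"
    unfolding base_def by blast+
  have aRp: "\<alpha> \<in> Rp" and ha: "h \<alpha> > 0" using ap unfolding pos_Rp by blast+
  have aR: "\<alpha> \<in> R" using aRp Rp_R by auto
  obtain c where c: "\<forall>d\<in>D. 0 \<le> c d" "\<alpha> = (\<Sum>d\<in>D. c d *\<^sub>R d)" using pos_cn[OF aRp ha] unfolding K.cn_def by blast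
  have DV: "\<And>d. d \<in> D \<Longrightarrow> d \<in> V" using DRp RpV by auto
  have "ip \<alpha> \<alpha> = ip (\<Sum>d\<in>D. c d *\<^sub>R d) \<alpha>" using c(2) by simp
  also have "\<dots> = (\<Sum>d\<in>D. ip (c d *\<^sub>R d) \<alpha>)"
    by (rule ip_sum_left[OF finD]) (use DV subV in \<open>auto intro: subspace_scale\<close>)
  also have "\<dots> = (\<Sum>d\<in>D. c d * ip d \<alpha>)" by (rule sum.cong[OF refl]) (use DV ip_scale in auto)
  finally have ipa: "ip \<alpha> \<alpha> = (\<Sum>d\<in>D. c d * ip d \<alpha>)" .
  have "\<exists>d\<in>D. c d * ip d \<alpha> > 0"
  proof (rule ccontr)
    assume "\<not> (\<exists>d\<in>D. c d * ip d \<alpha> > 0)"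
    then have "\<forall>d\<in>D. c d * ip d \<alpha> \<le> 0" by (simp add: not_less)
    then have "(\<Sum>d\<in>D. c d * ip d \<alpha>) \<le> 0" by (intro sum_nonpos) auto
    then show False using ipa ip_pos_Rp[OF aRp] by linarith
  qed
  then obtain d where d: "d \<in> D" and cd: "c d * ip d \<alpha> > 0" by blast
  have ipd: "ip d \<alpha> > 0" using cd c(1) d by (meson mult_le_0_iff not_less)
  show "\<alpha> \<in> D"
  proof (rule ccontr)
    assume na: "\<alpha> \<notin> D"
    then have ad: "\<alpha> \<noteq> d" using d by auto
    have dRp: "d \<in> Rp" using d DRp by auto
    have dR: "d \<in> R" using d DR by auto
    have hd: "h d > 0" using hp[OF d] .
    have np: "\<forall>t. \<alpha> \<noteq> t *\<^sub>R d" using nonprop[OF aR dR ha hd ad] .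
    have np2: "\<forall>t. d \<noteq> t *\<^sub>R \<alpha>" using nonprop[OF dR aR hd ha ad[symmetric]] .
    obtain i where i: "cr d \<alpha> = of_int i" using cr_Int[OF dRp aRp] Ints_cases by blast
    obtain j where j: "cr \<alpha> d = of_int j" using cr_Int[OF aRp dRp] Ints_cases by blast
    have "cr d \<alpha> > 0" using cr_sign(1)[OF dRp aRp] ipd by blast
    then have i1: "i \<ge> 1" using i by simp
    have "ip \<alpha> d > 0" using ipd ip_sym[of d \<alpha>] by simp
    then have "cr \<alpha> d > 0" using cr_sign(1)[OF aRp dRp] by blast
    then have j1: "j \<ge> 1" using j by simp
    have "of_int (i * j) \<le> (3::real)" using pq_le3[OF dRp aRp np2] i j by simp
    then have "i * j \<le> 3" by linarith
    then have ij: "i = 1 \<or> j = 1" using int_one i1 j1 by blast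
    have gRp: "\<alpha> - d \<in> Rp"
    proof (cases "i = 1")
      case True
      then have "sg d \<alpha> = \<alpha> - d" unfolding sg_def using i by simp
      then show ?thesis using sg_Rp[OF dRp aRp] by simp
    next
      case False
      then have "j = 1" using ij by blast
      then have "sg \<alpha> d = d - \<alpha>" unfolding sg_def using j by simp
      then have "d - \<alpha> \<in> Rp" using sg_Rp[OF aRp dRp] by simp
      then have "- (d - \<alpha>) \<in> Rp" by (rule neg_Rp)
      then show ?thesis by simp
    qed
    have gc: "\<alpha> - d \<in> K.cn"
    proof (rule ccontr)
      assume "\<alpha> - d \<notin> K.cn"
      then have "- (\<alpha> - d) \<in> K.cn" using cone[OF gRp] by blast
      then have y: "d - \<alpha> \<in> K.cn" by simp
      have "\<alpha> + (d - \<alpha>) = d" by simp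
      then obtain t where "\<alpha> = t *\<^sub>R d" using cn_single[OF pos_cn[OF aRp ha] y _ d] by blast
      then show False using np by blast
    qed
    have "h (\<alpha> - d) \<ge> 0" using hcn[OF gc] .
    moreover have "h (\<alpha> - d) \<noteq> 0" using h_ne0 gRp Rp_R by blast
    ultimately have hg: "h (\<alpha> - d) > 0" by simp
    have "d \<in> pos_roots le Rp" "\<alpha> - d \<in> pos_roots le Rp" unfolding pos_Rp using dRp hd gRp hg by blast+
    moreover have "\<alpha> = d + (\<alpha> - d)" by simp
    ultimately show False using ind0 by blast
  qed
qed

lemma terminal: "base le Rp = D" using D_sub_base base_sub_D by blast

end

context rsO begin

definition pr :: "'a \<Rightarrow> 'a" where "pr x = (if h x > 0 then x else - x)"

lemma pr_Rp: assumes x: "x \<in> Rp" shows "pr x \<in> Rp" "h (pr x) > 0"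
proof -
  show "pr x \<in> Rp" unfolding pr_def using x neg_Rp by auto
  have "h x \<noteq> 0" using h_ne0 x Rp_R by blast
  then show "h (pr x) > 0" unfolding pr_def using h_neg by auto
qed

lemma sg_pr: assumes x: "x \<in> Rp" and y: "y \<in> V" shows "sg (pr x) y = sg x y"
  unfolding pr_def using sg_negr[of x y] x y Rp_R by auto

lemma h_pr: "h (pr x) = (if h x > 0 then h x else - h x)"
  unfolding pr_def using h_neg by auto

lemma refl_inj:
  assumes a: "a \<in> R" and b: "b \<in> R" and ha: "h a > 0" and hb: "h b > 0" and e: "refl V R a = refl V R b"
  shows "a = b"
proof (rule ccontr)
  assume ab: "a \<noteq> b"
  have bV: "b \<in> V" using aV b by auto
  have "restrict (sg a) V b = restrict (sg b) V b" using e unfolding refl_eq by simp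
  then have "sg a b = - b" using bV b by simp
  then have "b - cr a b *\<^sub>R a = - b" unfolding sg_def .
  then have "b + b = cr a b *\<^sub>R a" by (simp add: algebra_simps)
  then have "(2::real) *\<^sub>R b = cr a b *\<^sub>R a" by (simp add: scaleR_2)
  then have "b = (cr a b / 2) *\<^sub>R a" by (metis (no_types, lifting) divide_inverse_commute field_sum_of_halves
      mult_2 real_vector_affinity_eq scaleR_scaleR zero_neq_numeral)
  then show False using nonprop[OF b a hb ha ab[symmetric]] by blast
qed

lemma conj_refl: assumes a: "a \<in> R" and b: "b \<in> R"
  shows "compose V (compose V (refl V R a) (refl V R b)) (map_inv V (refl V R a)) = refl V R (sg a b)"
  unfolding refl_eq map_inv_sg[OF a] compose_def
proof (rule restrict_ext)
  fix x assume x: "x \<in> V"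
  have x1: "sg a x \<in> V" using sg_V[OF a x] .
  have x2: "sg b (sg a x) \<in> V" using sg_V[OF b x1] .
  show "(\<lambda>x\<in>V. restrict (sg a) V (restrict (sg b) V x)) (restrict (sg a) V x) = sg (sg a b) x"
    using x x1 x2 sg_conj[OF a b x] by simp
qed

definition PP :: "'a set \<Rightarrow> real" where "PP E = (\<Sum>d\<in>E. h d)"

lemma Inv_facts: assumes "Inv D" shows "D \<subseteq> Rp" "\<And>d. d \<in> D \<Longrightarrow> h d > 0" "finite D"
  using assms finite_Rp finite_subset unfolding Inv_def by blast+

lemma step1:
  assumes I: "Inv D" and a: "a \<in> D" and b: "b \<in> D" and ab: "a \<noteq> b" and lt: "h (pr (sg a b)) < h b"
  shows "\<exists>D'. Inv D' \<and> PP D' < PP D \<and> nielsen_step V (refl V R ` D) (refl V R ` D')"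
proof -
  have DRp: "D \<subseteq> Rp" and hp: "\<And>d. d \<in> D \<Longrightarrow> h d > 0" and finD: "finite D" using Inv_facts[OF I] by auto
  have aRp: "a \<in> Rp" and bRp: "b \<in> Rp" using a b DRp by auto
  have aR: "a \<in> R" and bR: "b \<in> R" using aRp bRp Rp_R by auto
  have sabRp: "sg a b \<in> Rp" using sg_Rp[OF aRp bRp] .
  define b' where "b' = pr (sg a b)"
  have b'Rp: "b' \<in> Rp" and hb': "h b' > 0" unfolding b'_def using pr_Rp[OF sabRp] by auto
  have b'R: "b' \<in> R" using b'Rp Rp_R by auto
  define D' where "D' = insert b' (D - {b})"
  have aD': "a \<in> D'" using a ab D'_def by auto
  have D'R: "D' \<subseteq> R" using DRp b'Rp Rp_R D'_def by auto
  have sgb': "sg b' y = sg a (sg b (sg a y))" if y: "y \<in> V" for y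
    unfolding b'_def using sg_pr[OF sabRp y] sg_conj[OF aR bR y] by simp
  have per: "\<forall>c\<in>D. \<exists>us. set us \<subseteq> D' \<and> (\<forall>x\<in>V. sg c x = ev us x)"
  proof
    fix c assume c: "c \<in> D"
    show "\<exists>us. set us \<subseteq> D' \<and> (\<forall>x\<in>V. sg c x = ev us x)"
    proof (cases "c = b")
      case False
      then show ?thesis using c D'_def by (intro exI[of _ "[c]"]) auto
    next
      case True
      have "\<forall>x\<in>V. sg c x = ev [a, b', a] x"
      proof
        fix x assume x: "x \<in> V"
        have "ev [a, b', a] x = sg a (sg b' (sg a x))" by simp
        also have "\<dots> = sg a (sg a (sg b (sg a (sg a x))))" using sgb'[OF sg_V[OF aR x]] by simp
        also have "\<dots> = sg b x" using aR by simp
        finally show "sg c x = ev [a, b', a] x" using True by simp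
      qed
      then show ?thesis using aD' D'_def by (intro exI[of _ "[a, b', a]"]) auto
    qed
  qed
  have wsub: "\<exists>vs. set vs \<subseteq> D' \<and> eqV ws vs" if ws: "set ws \<subseteq> D" for ws
    by (rule word_subst[OF D'R]) (use per ws in blast)
  have orbD': "\<exists>us d''. set us \<subseteq> D' \<and> d'' \<in> D' \<and> d = ev us d''" if d: "d \<in> D" for d
  proof (cases "d = b")
    case False
    then show ?thesis using d D'_def by (intro exI[of _ "[]"] exI[of _ d]) auto
  next
    case True
    show ?thesis
    proof (cases "h (sg a b) > 0")
      case True
      then have "b' = sg a b" unfolding b'_def pr_def by simp
      then have "b = ev [a] b'" using aR by simp
      then show ?thesis using \<open>d = b\<close> aD' D'_def by (intro exI[of _ "[a]"] exI[of _ b']) auto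
    next
      case False
      then have bb: "b' = - sg a b" unfolding b'_def pr_def by simp
      have "ev [a, b'] b' = sg a (sg b' b')" by simp
      also have "\<dots> = sg a (- b')" using b'R by simp
      also have "\<dots> = b" unfolding bb using aR by (simp add: sg_neg)
      finally show ?thesis using \<open>d = b\<close> aD' D'_def by (intro exI[of _ "[a, b']"] exI[of _ b']) auto
    qed
  qed
  have InvD': "Inv D'"
    unfolding Inv_def
  proof (intro conjI)
    show "D' \<subseteq> Rp" using DRp b'Rp D'_def by auto
    show "\<forall>d\<in>D'. 0 < h d" using hp hb' D'_def by auto
    show "\<forall>b0\<in>B. \<exists>us. set us \<subseteq> D' \<and> (\<forall>x\<in>V. sg b0 x = ev us x)"
    proof
      fix b0 assume b0: "b0 \<in> B"
      obtain us where us: "set us \<subseteq> D" "\<forall>x\<in>V. sg b0 x = ev us x" using I b0 unfolding Inv_def by blast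
      obtain vs where vs: "set vs \<subseteq> D'" "eqV us vs" using wsub[OF us(1)] by blast
      show "\<exists>us. set us \<subseteq> D' \<and> (\<forall>x\<in>V. sg b0 x = ev us x)"
        using us(2) vs unfolding eqV_def by (intro exI[of _ vs]) auto
    qed
    show "B \<subseteq> Orb D'"
    proof
      fix b0 assume b0: "b0 \<in> B"
      obtain ws d where wd: "set ws \<subseteq> D" "d \<in> D" "b0 = ev ws d" using I b0 unfolding Inv_def Orb_def by blast
      obtain vs where vs: "set vs \<subseteq> D'" "eqV ws vs" using wsub[OF wd(1)] by blast
      obtain us d'' where ud: "set us \<subseteq> D'" "d'' \<in> D'" "d = ev us d''" using orbD'[OF wd(2)] by blast
      have dV: "d \<in> V" using wd(2) DRp RpV by auto
      have "b0 = ev vs d" using wd(3) vs(2) dV unfolding eqV_def by simp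
      also have "\<dots> = ev (vs @ us) d''" using ud(3) by simp
      finally show "b0 \<in> Orb D'" unfolding Orb_def using vs(1) ud
        by (intro CollectI exI[of _ "vs @ us"] exI[of _ d'']) auto
    qed
  qed
  have PPlt: "PP D' < PP D"
  proof -
    have fin1: "finite (D - {b})" using finD by auto
    have e1: "PP D = h b + PP (D - {b})" unfolding PP_def using sum.remove[OF finD b] .
    have "PP D' \<le> h b' + PP (D - {b})"
    proof (cases "b' \<in> D - {b}")
      case True
      then have "PP D' = PP (D - {b})" unfolding PP_def D'_def by (simp add: insert_absorb)
      then show ?thesis using hb' by simp
    next
      case False
      then show ?thesis unfolding PP_def D'_def using fin1 by simp
    qed
    moreover have "h b' < h b" using lt b'_def by simp
    ultimately show ?thesis using e1 by simp
  qed
  have ns: "nielsen_step V (refl V R ` D) (refl V R ` D')"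
    unfolding nielsen_step_def
  proof (intro bexI conjI)
    show "refl V R a \<noteq> refl V R b" using refl_inj[OF aR bR hp[OF a] hp[OF b]] ab by blast
    have c: "compose V (compose V (refl V R a) (refl V R b)) (map_inv V (refl V R a)) = refl V R b'"
    proof -
      have "compose V (compose V (refl V R a) (refl V R b)) (map_inv V (refl V R a)) = refl V R (sg a b)"
        by (rule conj_refl[OF aR bR])
      also have "refl V R (sg a b) = refl V R b'" unfolding refl_eq b'_def
        by (rule restrict_ext) (use sg_pr[OF sabRp] in simp)
      finally show ?thesis .
    qed
    have r: "refl V R ` D - {refl V R b} = refl V R ` (D - {b})"
    proof
      show "refl V R ` D - {refl V R b} \<subseteq> refl V R ` (D - {b})" by blast
      show "refl V R ` (D - {b}) \<subseteq> refl V R ` D - {refl V R b}"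
      proof
        fix t assume "t \<in> refl V R ` (D - {b})"
        then obtain d where d: "d \<in> D" "d \<noteq> b" "t = refl V R d" by blast
        have "refl V R d \<noteq> refl V R b"
          using refl_inj[of d b] d DRp Rp_R hp b bR by blast
        then show "t \<in> refl V R ` D - {refl V R b}" using d by (simp add: image_iff) blast
      qed
    qed
    show "refl V R ` D' = insert (compose V (compose V (refl V R a) (refl V R b)) (map_inv V (refl V R a)))
            (refl V R ` D - {refl V R b})"
      unfolding c r D'_def by simp
  qed (use a b in auto)
  show ?thesis using InvD' PPlt ns by blast
qed

end

context rsO begin

lemma step:
  assumes I: "Inv D" and a: "a \<in> D" and b: "b \<in> D" and ab: "a \<noteq> b" and ip: "ip a b > 0"
  shows "\<exists>D'. Inv D' \<and> PP D' < PP D \<and> nielsen_step V (refl V R ` D) (refl V R ` D')"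
proof -
  have DRp: "D \<subseteq> Rp" and hp: "\<And>d. d \<in> D \<Longrightarrow> h d > 0" using Inv_facts[OF I] by auto
  have aRp: "a \<in> Rp" and bRp: "b \<in> Rp" using a b DRp by auto
  have aR: "a \<in> R" and bR: "b \<in> R" using aRp bRp Rp_R by auto
  have ha: "h a > 0" and hb: "h b > 0" using hp a b by auto
  define p where "p = cr a b"
  define q where "q = cr b a"
  have p0: "p > 0" unfolding p_def using cr_sign(1)[OF aRp bRp] ip by blast
  have q0: "q > 0" unfolding q_def using cr_sign(1)[OF bRp aRp] ip ip_sym[of a b] by simp
  have np: "\<forall>t. a \<noteq> t *\<^sub>R b" using nonprop[OF aR bR ha hb ab] .
  have pq: "p * q \<le> 3" unfolding p_def q_def using pq_le3[OF aRp bRp np] .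
  have h1: "h (sg a b) = h b - p * h a" unfolding sg_def p_def by (simp add: h_diff h_scale)
  have h2: "h (sg b a) = h a - q * h b" unfolding sg_def q_def by (simp add: h_diff h_scale)
  have "h (pr (sg a b)) < h b \<or> h (pr (sg b a)) < h a"
  proof (rule ccontr)
    assume "\<not> (h (pr (sg a b)) < h b \<or> h (pr (sg b a)) < h a)"
    then have c1: "h (pr (sg a b)) \<ge> h b" and c2: "h (pr (sg b a)) \<ge> h a" by auto
    have "p * h a > 0" "q * h b > 0" using p0 q0 ha hb by auto
    then have "\<not> h (sg a b) > 0" "\<not> h (sg b a) > 0" using c1 c2 h1 h2 h_pr by auto
    then have e1: "p * h a \<ge> 2 * h b" and e2: "q * h b \<ge> 2 * h a" using c1 c2 h1 h2 h_pr by auto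
    have "(p * h a) * (q * h b) \<ge> (2 * h b) * (2 * h a)"
      by (rule mult_mono[OF e1 e2]) (use p0 q0 ha hb in auto)
    then have "(p * q) * (h a * h b) \<ge> 4 * (h a * h b)" by (simp add: algebra_simps)
    moreover have "h a * h b > 0" using ha hb by simp
    ultimately have "p * q \<ge> 4" using mult_le_cancel_right_pos by blast
    then show False using pq by simp
  qed
  then show ?thesis
  proof
    assume "h (pr (sg a b)) < h b" then show ?thesis using step1[OF I a b ab] by blast
  next
    assume "h (pr (sg b a)) < h a" then show ?thesis using step1[OF I b a ab[symmetric]] by blast
  qed
qed

definition Rpos where "Rpos = {\<gamma>\<in>Rp. h \<gamma> > 0}"

lemma descent_n:
  "\<forall>D. Inv D \<longrightarrow> card {E. E \<subseteq> Rpos \<and> PP E < PP D} = n \<longrightarrow>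
     (nielsen_step V)\<^sup>*\<^sup>* (refl V R ` D) (refl V R ` base le Rp)"
proof (induction n rule: less_induct)
  case (less n)
  show ?case
  proof (intro allI impI)
    fix D assume I: "Inv D" and cn: "card {E. E \<subseteq> Rpos \<and> PP E < PP D} = n"
    show "(nielsen_step V)\<^sup>*\<^sup>* (refl V R ` D) (refl V R ` base le Rp)"
    proof (cases "\<exists>a\<in>D. \<exists>b\<in>D. a \<noteq> b \<and> ip a b > 0")
      case True
      then obtain a b where ab: "a \<in> D" "b \<in> D" "a \<noteq> b" "ip a b > 0" by blast
      obtain D' where D': "Inv D'" "PP D' < PP D" "nielsen_step V (refl V R ` D) (refl V R ` D')"
        using step[OF I ab] by blast
      have D'pos: "D' \<subseteq> Rpos" using Inv_facts[OF D'(1)] unfolding Rpos_def by auto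
      have finRpos: "finite Rpos" unfolding Rpos_def using finite_Rp by auto
      have sub: "{E. E \<subseteq> Rpos \<and> PP E < PP D'} \<subset> {E. E \<subseteq> Rpos \<and> PP E < PP D}"
        using D'(2) D'pos by auto
      have fin: "finite {E. E \<subseteq> Rpos \<and> PP E < PP D}"
        by (rule finite_subset[of _ "Pow Rpos"]) (use finRpos in auto)
      have "card {E. E \<subseteq> Rpos \<and> PP E < PP D'} < n" using psubset_card_mono[OF fin sub] cn by simp
      then have "(nielsen_step V)\<^sup>*\<^sup>* (refl V R ` D') (refl V R ` base le Rp)"
        using less.IH D'(1) by blast
      then show ?thesis using D'(3) by (rule converse_rtranclp_into_rtranclp[rotated])
    next
      case False
      then have obt: "\<And>a b. a \<in> D \<Longrightarrow> b \<in> D \<Longrightarrow> a \<noteq> b \<Longrightarrow> ip a b \<le> 0" by (meson not_less)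
      interpret T: TermL V R B le D by unfold_locales (use I obt in auto)
      show ?thesis using T.terminal by simp
    qed
  qed
qed

lemma nielsen_final: "(nielsen_step V)\<^sup>*\<^sup>* (refl V R ` B) (refl V R ` base le Rp)"
  using descent_n Inv_B by blast

end

theorem theorem1p14:
  fixes V :: "'a::euclidean_space set" and R :: "'a set"
    and le :: "'a \<Rightarrow> 'a \<Rightarrow> bool" and B :: "'a set"
  assumes "root_system V R" and "reduced R"
    and "vs_total_order V le"
    and "B \<subseteq> pos_roots le R"
  defines "W' \<equiv> gen_group V (refl V R ` B)"
  defines "R' \<equiv> {w \<beta> | w \<beta>. w \<in> W' \<and> \<beta> \<in> B}"
  defines "V' \<equiv> span R'"
  shows "root_system V' R' \<and>
         weyl V' R' = (\<lambda>w. restrict w V') ` W' \<and>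
         (nielsen_step V)\<^sup>*\<^sup>* (refl V R ` B) (refl V R ` base le R')"
proof -
  have BR: "B \<subseteq> R" using assms(4) unfolding pos_roots_def by auto
  interpret O: rsO V R B le
    by unfold_locales (use assms(1,2,3,4) BR in auto)
  have W': "W' = O.G" unfolding W'_def using O.gen_G .
  have R': "R' = O.Rp" unfolding R'_def W' using O.Rp_eq .
  show ?thesis unfolding V'_def R' W' using O.part1 O.part2 O.nielsen_final by blast
qed


end
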